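(* Let $\phi,\psi$ be injective endomorphisms of $F_n$. Then the action of $\mathrm{Eq}(\phi,\psi)$ on the set of regular points of $\mathrm{Eq}(\widehat\phi,\widehat\psi)$, by left multiplication, has finitely many orbits.
   Context: $F_n$ is the free group on a finite basis $A$; elements are identified with reduced words over $\widetilde A=A\cup A^{-1}$; maps are written on the right. For reduced words $u,v$, $u\wedge v$ is their longest common prefix. $\widehat F_n$ is the completion of $F_n$ for the prefix metric $d(u,v)=2^{-|u\wedge v|}$ ($u\neq v$), $d(u,u)=0$; it is the set of all finite and infinite reduced words over $\widetilde A$. An injective endomorphism $\phi$ of $F_n$ has a unique continuous extension $\widehat\phi$ to $\widehat F_n$. $\mathrm{Eq}(\phi,\psi)=\{x\in F_n\mid x\phi=x\psi\}$ (a subgroup) and $\mathrm{Eq}(\widehat\phi,\widehat\psi)=\{x\in\widehat F_n\mid x\widehat\phi=x\widehat\psi\}$. The subgroup $\mathrm{Eq}(\phi,\psi)$ acts on $\mathrm{Eq}(\widehat\phi,\widehat\psi)$ by left multiplication $u\cdot\alpha=$ reduced form of $u\alpha$. A point of $\mathrm{Eq}(\widehat\phi,\widehat\psi)$ is singular if it lies in the topological closure of $\mathrm{Eq}(\phi,\psi)$ in $\widehat F_n$, and regular otherwise. *)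

theory Defs
  imports "HOL-Analysis.Analysis"
begin

text \<open>Free group F_n on a finite basis, given by the finite type 'a.
  A letter (a, True) stands for the generator a, (a, False) for its inverse.\<close>

type_synonym 'a letter = "'a \<times> bool"
type_synonym 'a word = "'a letter list"

definition inv1 :: "'a letter \<Rightarrow> 'a letter" where
  "inv1 x = (fst x, \<not> snd x)"

definition reduced :: "'a word \<Rightarrow> bool" where
  "reduced w \<longleftrightarrow> (\<forall>i. Suc i < length w \<longrightarrow> w ! Suc i \<noteq> inv1 (w ! i))"

fun red :: "'a word \<Rightarrow> 'a word" where
  "red [] = []"
| "red (x # w) = (case red w of [] \<Rightarrow> [x]
                   | y # v \<Rightarrow> (if y = inv1 x then v else x # y # v))"

definition winv :: "'a word \<Rightarrow> 'a word" where
  "winv w = rev (map inv1 w)"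

definition mult :: "'a word \<Rightarrow> 'a word \<Rightarrow> 'a word" where
  "mult u v = red (u @ v)"

definition FG :: "'a word set" where
  "FG = {w. reduced w}"

text \<open>The endomorphism of F_n sending each generator a to (the reduced form of) f a.
  Every endomorphism of F_n arises this way.\<close>
definition hom :: "('a \<Rightarrow> 'a word) \<Rightarrow> 'a word \<Rightarrow> 'a word" where
  "hom f w = red (concat (map (\<lambda>x. if snd x then f (fst x) else winv (f (fst x))) w))"

definition inj_endo :: "('a \<Rightarrow> 'a word) \<Rightarrow> bool" where
  "inj_endo f \<longleftrightarrow> inj_on (hom f) FG"

text \<open>Finite and infinite words; the completion is the set of reduced ones.\<close>
datatype 'a fw = Fin "'a word" | Inf "nat \<Rightarrow> 'a letter"

fun letter_at :: "'a fw \<Rightarrow> nat \<Rightarrow> 'a letter option" where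
  "letter_at (Fin w) i = (if i < length w then Some (w ! i) else None)"
| "letter_at (Inf f) i = Some (f i)"

fun valid :: "'a fw \<Rightarrow> bool" where
  "valid (Fin w) = reduced w"
| "valid (Inf f) = (\<forall>i. f (Suc i) \<noteq> inv1 (f i))"

definition hatF :: "'a fw set" where
  "hatF = {x. valid x}"

text \<open>Length of the longest common prefix (for distinct elements).\<close>
definition lcp :: "'a fw \<Rightarrow> 'a fw \<Rightarrow> nat" where
  "lcp x y = (LEAST i. letter_at x i \<noteq> letter_at y i)"

definition dpre :: "'a fw \<Rightarrow> 'a fw \<Rightarrow> real" where
  "dpre x y = (if x = y then 0 else 2 powr (- real (lcp x y)))"

definition Ttop :: "'a fw topology" where
  "Ttop = Metric_space.mtopology hatF dpre"

text \<open>The continuous extension of the endomorphism given by f to the completion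
  (the unique continuous map hatF \<rightarrow> hatF extending it; normalized outside hatF).\<close>
definition hatHom :: "('a \<Rightarrow> 'a word) \<Rightarrow> 'a fw \<Rightarrow> 'a fw" where
  "hatHom f = (THE \<Phi>. continuous_map Ttop Ttop \<Phi>
        \<and> (\<forall>w\<in>FG. \<Phi> (Fin w) = Fin (hom f w))
        \<and> (\<forall>x. x \<notin> hatF \<longrightarrow> \<Phi> x = Fin []))"

definition Eq :: "('a \<Rightarrow> 'a word) \<Rightarrow> ('a \<Rightarrow> 'a word) \<Rightarrow> 'a word set" where
  "Eq f g = {x \<in> FG. hom f x = hom g x}"

definition EqHat :: "('a \<Rightarrow> 'a word) \<Rightarrow> ('a \<Rightarrow> 'a word) \<Rightarrow> 'a fw set" where
  "EqHat f g = {x \<in> hatF. hatHom f x = hatHom g x}"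

text \<open>Left multiplication of a finite word on a (finite or infinite) word, with reduction.
  canc cancels the reversed word r against the start of an infinite word.\<close>
fun canc :: "'a word \<Rightarrow> (nat \<Rightarrow> 'a letter) \<Rightarrow> 'a word \<times> (nat \<Rightarrow> 'a letter)" where
  "canc [] h = ([], h)"
| "canc (x # r) h = (if h 0 = inv1 x then canc r (\<lambda>i. h (Suc i)) else (x # r, h))"

definition prepend :: "'a word \<Rightarrow> (nat \<Rightarrow> 'a letter) \<Rightarrow> nat \<Rightarrow> 'a letter" where
  "prepend w h i = (if i < length w then w ! i else h (i - length w))"

fun act :: "'a word \<Rightarrow> 'a fw \<Rightarrow> 'a fw" where
  "act u (Fin w) = Fin (mult u w)"
| "act u (Inf h) = (case canc (rev (red u)) h of (r, h') \<Rightarrow> Inf (prepend (rev r) h'))"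

definition singular :: "('a \<Rightarrow> 'a word) \<Rightarrow> ('a \<Rightarrow> 'a word) \<Rightarrow> 'a fw set" where
  "singular f g = EqHat f g \<inter> (Ttop closure_of (Fin ` Eq f g))"

definition regular :: "('a \<Rightarrow> 'a word) \<Rightarrow> ('a \<Rightarrow> 'a word) \<Rightarrow> 'a fw set" where
  "regular f g = EqHat f g - (Ttop closure_of (Fin ` Eq f g))"

definition orbit :: "('a \<Rightarrow> 'a word) \<Rightarrow> ('a \<Rightarrow> 'a word) \<Rightarrow> 'a fw \<Rightarrow> 'a fw set" where
  "orbit f g \<alpha> = {act u \<alpha> | u. u \<in> Eq f g}"

end

theory Submission
  imports Defs
begin


lemma inv1_inv1[simp]: "inv1 (inv1 x) = x" by (simp add: inv1_def)
lemma inv1_neq[simp]: "inv1 x \<noteq> x" by (cases x) (simp add: inv1_def)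
lemma inv1_neq2[simp]: "x \<noteq> inv1 x" by (cases x) (simp add: inv1_def)
lemma inv1_eq_iff[simp]: "inv1 x = inv1 y \<longleftrightarrow> x = y" by (metis inv1_inv1)

lemma reduced_Nil[simp]: "reduced []" by (simp add: reduced_def)
lemma reduced_single[simp]: "reduced [x]" by (simp add: reduced_def)
lemma reduced_Cons_Cons[simp]: "reduced (x # y # v) \<longleftrightarrow> y \<noteq> inv1 x \<and> reduced (y # v)"
proof
  assume r: "reduced (x # y # v)"
  have "y \<noteq> inv1 x" using r[unfolded reduced_def, rule_format, of 0] by simp
  moreover have "reduced (y # v)" unfolding reduced_def
  proof (intro allI impI)
    fix i assume "Suc i < length (y # v)"
    then show "(y # v) ! Suc i \<noteq> inv1 ((y # v) ! i)"
      using r[unfolded reduced_def, rule_format, of "Suc i"] by simp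
  qed
  ultimately show "y \<noteq> inv1 x \<and> reduced (y # v)" by simp
next
  assume a: "y \<noteq> inv1 x \<and> reduced (y # v)"
  show "reduced (x # y # v)" unfolding reduced_def
  proof (intro allI impI)
    fix i assume i: "Suc i < length (x # y # v)"
    show "(x # y # v) ! Suc i \<noteq> inv1 ((x # y # v) ! i)"
    proof (cases i)
      case 0 then show ?thesis using a by simp
    next
      case (Suc j) then show ?thesis using a i unfolding reduced_def by auto
    qed
  qed
qed

lemma reduced_Cons: "reduced (x # w) \<longleftrightarrow> reduced w \<and> (w = [] \<or> hd w \<noteq> inv1 x)"
  by (cases w) auto

lemma reduced_append: "reduced (u @ v) \<longleftrightarrow> reduced u \<and> reduced v \<and> (u = [] \<or> v = [] \<or> hd v \<noteq> inv1 (last u))"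
proof (induction u)
  case Nil then show ?case by simp
next
  case (Cons x u)
  show ?case
  proof (cases u)
    case Nil then show ?thesis by (cases v) (auto simp: reduced_Cons)
  next
    case (Cons y u')
    then show ?thesis using Cons.IH by (auto simp: reduced_Cons)
  qed
qed

definition stp :: "'a letter \<Rightarrow> 'a word \<Rightarrow> 'a word" where
  "stp x z = (case z of [] \<Rightarrow> [x] | y # v \<Rightarrow> if y = inv1 x then v else x # y # v)"

lemma red_Cons': "red (x # w) = stp x (red w)" by (simp add: stp_def)

lemma stp_reduced: "reduced z \<Longrightarrow> reduced (stp x z)"
  by (cases z) (auto simp: stp_def reduced_Cons)

lemma red_reduced[simp]: "reduced (red w)"
  by (induction w) (auto simp: red_Cons' stp_reduced simp del: red.simps(2))

lemma red_id: "reduced w \<Longrightarrow> red w = w"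
proof (induction w)
  case Nil then show ?case by simp
next
  case (Cons x w)
  then have "reduced w" by (simp add: reduced_Cons)
  with Cons show ?case by (cases w) (auto simp: red_Cons' stp_def simp del: red.simps(2))
qed

lemma red_red[simp]: "red (red w) = red w" by (simp add: red_id)

lemma stp_cancel: "reduced z \<Longrightarrow> stp x (stp (inv1 x) z) = z"
  by (cases z) (auto simp: stp_def reduced_Cons split: list.splits)

lemma red_foldr: "red w = foldr stp w []"
  by (induction w) (auto simp: red_Cons' simp del: red.simps(2))

lemma foldr_stp_reduced: "reduced z \<Longrightarrow> reduced (foldr stp w z)"
  by (induction w) (auto simp: stp_reduced)

lemma foldr_stp_step: "reduced w \<Longrightarrow> reduced z \<Longrightarrow> foldr stp (stp x w) z = stp x (foldr stp w z)"
proof (cases w)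
  case Nil then show ?thesis by (simp add: stp_def)
next
  case (Cons y v)
  assume z: "reduced z"
  show ?thesis
  proof (cases "y = inv1 x")
    case True
    then have "stp x (foldr stp w z) = stp x (stp (inv1 x) (foldr stp v z))" using Cons by simp
    also have "\<dots> = foldr stp v z" by (rule stp_cancel[OF foldr_stp_reduced[OF z]])
    finally show ?thesis using Cons True by (simp add: stp_def)
  next
    case False then show ?thesis using Cons by (simp add: stp_def)
  qed
qed

lemma foldr_stp_red: "reduced z \<Longrightarrow> foldr stp u z = foldr stp (red u) z"
proof (induction u)
  case Nil then show ?case by simp
next
  case (Cons x u)
  have "foldr stp (x # u) z = stp x (foldr stp (red u) z)" using Cons by simp
  also have "\<dots> = foldr stp (stp x (red u)) z" using foldr_stp_step[of "red u" z x] Cons.prems by simp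
  finally show ?case by (simp add: red_Cons' del: red.simps)
qed

lemma red_append_foldr: "red (u @ v) = foldr stp u (red v)"
  by (induction u) (auto simp: red_Cons' simp del: red.simps(2))

lemma red_append: "red (u @ v) = red (red u @ red v)"
  by (metis foldr_stp_red red_append_foldr red_reduced red_red)

lemma red_left[simp]: "red (red u @ v) = red (u @ v)"
  by (metis red_append red_red)
lemma red_right[simp]: "red (u @ red v) = red (u @ v)"
  by (metis red_append red_red)
lemma red_mid: "red (u @ red v @ w) = red (u @ v @ w)"
  by (metis append.assoc red_left red_right)

lemma length_red_le: "length (red w) \<le> length w"
proof (induction w)
  case Nil then show ?case by simp
next
  case (Cons x w) then show ?case
    by (auto simp: red_Cons' stp_def simp del: red.simps(2) split: list.splits)
qed

lemma winv_Nil[simp]: "winv [] = []" by (simp add: winv_def)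
lemma winv_Cons: "winv (x # w) = winv w @ [inv1 x]" by (simp add: winv_def)
lemma winv_append: "winv (u @ v) = winv v @ winv u" by (simp add: winv_def)
lemma winv_winv[simp]: "winv (winv w) = w" by (simp add: winv_def rev_map comp_def)
lemma length_winv[simp]: "length (winv w) = length w" by (simp add: winv_def)
lemma winv_eq_Nil[simp]: "winv w = [] \<longleftrightarrow> w = []" by (simp add: winv_def)
lemma winv_single[simp]: "winv [x] = [inv1 x]" by (simp add: winv_def)
lemma last_winv: "w \<noteq> [] \<Longrightarrow> last (winv w) = inv1 (hd w)"
  by (cases w) (auto simp: winv_def)
lemma hd_winv: "w \<noteq> [] \<Longrightarrow> hd (winv w) = inv1 (last w)"
  by (simp add: winv_def hd_rev hd_map last_map)

lemma reduced_winv: "reduced w \<Longrightarrow> reduced (winv w)"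
proof (induction w)
  case Nil then show ?case by simp
next
  case (Cons x w)
  then have rw: "reduced w" by (simp add: reduced_Cons)
  show ?case unfolding winv_Cons reduced_append
    using Cons rw by (auto simp: last_winv reduced_Cons)
qed

lemma reduced_winv_iff[simp]: "reduced (winv w) \<longleftrightarrow> reduced w"
  by (metis reduced_winv winv_winv)

lemma red_inv_pair: "red (inv1 x # x # w) = red w"
  by (simp add: red_Cons' stp_cancel del: red.simps) (metis inv1_inv1 stp_cancel red_reduced)

lemma red_winv_cancel[simp]: "red (winv w @ w) = []"
proof (induction w)
  case Nil then show ?case by simp
next
  case (Cons x w)
  have "red (winv (x # w) @ x # w) = red (winv w @ red (inv1 x # x # w))"
    by (simp add: winv_Cons del: red.simps)
  also have "\<dots> = red (winv w @ w)" by (simp only: red_inv_pair red_right)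
  finally show ?case using Cons by simp
qed

lemma red_winv_cancel2[simp]: "red (w @ winv w) = []"
  using red_winv_cancel[of "winv w"] by simp

lemma red_cancel_l: "red (winv w @ w @ x) = red x"
  by (metis append.assoc red_left red_winv_cancel append_Nil)
lemma red_cancel_r: "red (w @ winv w @ x) = red x"
  by (metis append.assoc red_left red_winv_cancel2 append_Nil)

lemma red_winv: "red (winv w) = winv (red w)"
proof -
  have "red (winv w) = red (winv w @ red (w @ winv (red w)))"
    by (metis append_Nil2 red_left red_right red_winv_cancel2)
  also have "\<dots> = red (winv w @ w @ winv (red w))" by (simp add: red_mid)
  also have "\<dots> = winv (red w)" by (simp add: red_cancel_l red_id)
  finally show ?thesis .
qed

lemma red_Nil_iff: "red [] = []" by simp


lemma canc_decomp:
  assumes "reduced u" "reduced v"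
  shows "\<exists>u' t v'. u = u' @ t \<and> v = winv t @ v' \<and> red (u @ v) = u' @ v' \<and> reduced (u' @ v')"
  using assms(1)
proof (induction u)
  case Nil
  then show ?case using assms(2) by (intro exI[of _ "[]"] exI[of _ v]) (simp add: red_id)
next
  case (Cons x u0)
  then have r0: "reduced u0" by (simp add: reduced_Cons)
  from Cons.IH[OF r0] obtain a t b where ab: "u0 = a @ t" "v = winv t @ b" "red (u0 @ v) = a @ b" "reduced (a @ b)"
    by blast
  have eq: "red ((x # u0) @ v) = stp x (a @ b)" using ab by (simp add: red_Cons' del: red.simps(2))
  show ?case
  proof (cases a)
    case (Cons y a')
    then have "y \<noteq> inv1 x" using Cons.prems ab by (simp add: reduced_Cons)
    then have "stp x (a @ b) = x # a @ b" using Cons by (simp add: stp_def)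
    moreover have "reduced (x # a @ b)" using ab \<open>y \<noteq> inv1 x\<close> Cons by (simp add: reduced_Cons)
    ultimately show ?thesis using eq ab by (intro exI[of _ "x # a"] exI[of _ t] exI[of _ b]) simp
  next
    case Nil
    show ?thesis
    proof (cases b)
      case Nil2: Nil
      then show ?thesis using eq ab Nil by (intro exI[of _ "[x]"] exI[of _ t] exI[of _ b]) (simp add: stp_def)
    next
      case (Cons y b')
      show ?thesis
      proof (cases "y = inv1 x")
        case True
        then show ?thesis using eq ab Nil Cons
          by (intro exI[of _ "[]"] exI[of _ "x # t"] exI[of _ b']) (auto simp: stp_def winv_Cons reduced_Cons)
      next
        case False
        then show ?thesis using eq ab Nil Cons
          by (intro exI[of _ "[x]"] exI[of _ t] exI[of _ b]) (auto simp: stp_def reduced_Cons)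
      qed
    qed
  qed
qed

lemma length_red_app_ge: "reduced u \<Longrightarrow> reduced v \<Longrightarrow> length (red (u @ v)) + length v \<ge> length u"
  using canc_decomp[of u v] by auto

lemma red_cancel_l2: "red (a @ winv w @ w @ b) = red (a @ b)"
  by (metis red_cancel_l red_right)
lemma red_cancel_r2: "red (a @ w @ winv w @ b) = red (a @ b)"
  by (metis red_cancel_r red_right)

fun lcpl :: "'b list \<Rightarrow> 'b list \<Rightarrow> nat" where
  "lcpl (x # xs) (y # ys) = (if x = y then Suc (lcpl xs ys) else 0)"
| "lcpl _ _ = 0"

lemma lcpl_ge_iff: "n \<le> lcpl xs ys \<longleftrightarrow> n \<le> length xs \<and> n \<le> length ys \<and> take n xs = take n ys"
proof (induction xs ys arbitrary: n rule: lcpl.induct)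
  case (1 x xs y ys)
  then show ?case by (cases n) auto
qed auto

lemma lcpl_le1: "lcpl xs ys \<le> length xs" using lcpl_ge_iff by blast
lemma lcpl_le2: "lcpl xs ys \<le> length ys" using lcpl_ge_iff by blast
lemma lcpl_take: "take (lcpl xs ys) xs = take (lcpl xs ys) ys" using lcpl_ge_iff by blast
lemma lcpl_comm: "lcpl xs ys = lcpl ys xs"
  by (metis lcpl_ge_iff le_antisym order_refl)
lemma lcpl_neq: "lcpl xs ys < length xs \<Longrightarrow> lcpl xs ys < length ys \<Longrightarrow> xs ! lcpl xs ys \<noteq> ys ! lcpl xs ys"
proof (induction xs ys rule: lcpl.induct)
  case (1 x xs y ys) then show ?case by (cases "x = y") auto
qed auto
lemma lcpl_min: "min (lcpl a b) (lcpl b c) \<le> lcpl a c"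
  unfolding lcpl_ge_iff
  by (metis (no_types, lifting) lcpl_ge_iff min.cobounded1 min.cobounded2 min_def take_take)
lemma lcpl_append_same[simp]: "lcpl (p @ a) (p @ b) = length p + lcpl a b"
  by (induction p) auto
lemma lcpl_self[simp]: "lcpl a a = length a"
  by (induction a) auto
lemma lcpl_Nil[simp]: "lcpl [] a = 0" "lcpl a [] = 0"
  by (cases a; simp)+

lemma dist_formula:
  assumes "reduced A" "reduced B"
  shows "red (winv A @ B) = winv (drop (lcpl A B) A) @ drop (lcpl A B) B"
proof -
  define c where "c = lcpl A B"
  define p where "p = take c A"
  have A: "A = p @ drop c A" by (simp add: p_def)
  have "take c B = p" using lcpl_take[of A B] by (simp add: p_def c_def)
  then have B: "B = p @ drop c B" by (metis append_take_drop_id)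
  have "winv A @ B = winv (drop c A) @ winv p @ p @ drop c B"
  proof -
    have "winv A @ B = winv (p @ drop c A) @ (p @ drop c B)" using A B by metis
    then show ?thesis by (simp add: winv_append)
  qed
  then have "red (winv A @ B) = red (winv (drop c A) @ drop c B)"
    by (metis red_cancel_l red_right)
  also have "\<dots> = winv (drop c A) @ drop c B"
  proof (rule red_id)
    have rA: "reduced (drop c A)" and rB: "reduced (drop c B)"
      using assms A B reduced_append by metis+
    have "hd (drop c B) \<noteq> hd (drop c A)" if "drop c A \<noteq> []" "drop c B \<noteq> []"
      using that lcpl_neq[of A B] by (simp add: c_def hd_drop_conv_nth)
    then show "reduced (winv (drop c A) @ drop c B)"
      using rA rB by (auto simp: reduced_append last_winv)
  qed
  finally show ?thesis by (simp add: c_def)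
qed

definition dd :: "'a word \<Rightarrow> 'a word \<Rightarrow> nat" where
  "dd x y = length (red (winv x @ y))"

lemma dd_formula: "reduced A \<Longrightarrow> reduced B \<Longrightarrow> dd A B = length A + length B - 2 * lcpl A B"
  using lcpl_le1[of A B] lcpl_le2[of A B] by (simp add: dd_def dist_formula)

lemma dd_comm: "dd x y = dd y x"
proof -
  have "red (winv y @ x) = winv (red (winv x @ y))"
    by (simp add: red_winv[symmetric] winv_append)
  then show ?thesis by (simp add: dd_def)
qed

lemma dd_triangle: "dd x z \<le> dd x y + dd y z"
proof -
  have "red (winv x @ z) = red (winv x @ y @ winv y @ z)" by (simp add: red_cancel_r2)
  also have "\<dots> = red (red (winv x @ y) @ red (winv y @ z))"
    by (metis append.assoc red_append)
  finally have "dd x z \<le> length (red (winv x @ y) @ red (winv y @ z))"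
    unfolding dd_def by (metis length_red_le)
  then show ?thesis by (simp add: dd_def)
qed

lemma dd_self[simp]: "dd x x = 0" by (simp add: dd_def)

lemma dd_left: "dd (red (w @ x)) (red (w @ y)) = dd x y"
proof -
  have "red (winv (red (w @ x)) @ red (w @ y)) = red (winv x @ winv w @ w @ y)"
    by (simp add: red_winv[symmetric] winv_append red_mid[where u="winv x @ winv w", simplified])
  also have "\<dots> = red (winv x @ y)" by (metis red_cancel_l red_right)
  finally show ?thesis by (simp add: dd_def)
qed

lemma dd_Nil[simp]: "dd [] x = length (red x)" by (simp add: dd_def)


definition img :: "('a \<Rightarrow> 'a word) \<Rightarrow> 'a letter \<Rightarrow> 'a word" where
  "img f x = (if snd x then f (fst x) else winv (f (fst x)))"

lemma hom_alt: "hom f w = red (concat (map (img f) w))"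
  by (simp add: hom_def img_def[abs_def])

lemma hom_Nil[simp]: "hom f [] = []" by (simp add: hom_alt)

lemma hom_append: "hom f (u @ v) = red (hom f u @ hom f v)"
  by (simp add: hom_alt)

lemma hom_reduced[simp]: "reduced (hom f w)" by (simp add: hom_alt)

lemma img_inv1: "img f (inv1 x) = winv (img f x)"
  by (simp add: img_def inv1_def)

lemma concat_winv: "concat (map (img f) (winv w)) = winv (concat (map (img f) w))"
  by (induction w) (auto simp: winv_Cons winv_append img_inv1)

lemma hom_winv: "hom f (winv w) = winv (hom f w)"
  by (simp add: hom_alt concat_winv red_winv)

lemma hom_Cons: "hom f (x # w) = red (img f x @ hom f w)"
  by (simp add: hom_alt del: red.simps(2))

lemma hom_red_Cons: "reduced w \<Longrightarrow> hom f (stp x w) = hom f (x # w)"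
proof (cases w)
  case Nil then show ?thesis by (simp add: stp_def)
next
  case (Cons y v)
  assume rw: "reduced w"
  show ?thesis
  proof (cases "y = inv1 x")
    case True
    have "hom f (x # w) = red (img f x @ red (winv (img f x) @ hom f v))"
      using Cons True by (simp add: hom_Cons img_inv1 del: red.simps(2))
    also have "\<dots> = red (img f x @ winv (img f x) @ hom f v)" by (rule red_right)
    also have "\<dots> = hom f v" by (simp add: red_cancel_r red_id)
    finally show ?thesis using Cons True by (simp add: stp_def)
  next
    case False then show ?thesis using Cons by (simp add: stp_def)
  qed
qed

lemma hom_red: "hom f (red w) = hom f w"
proof (induction w)
  case Nil then show ?case by simp
next
  case (Cons x w)
  have "hom f (red (x # w)) = hom f (x # red w)"
    by (simp only: red_Cons' hom_red_Cons red_reduced)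
  also have "\<dots> = red (img f x @ hom f (red w))" by (rule hom_Cons)
  also have "\<dots> = hom f (x # w)" using Cons by (simp add: hom_Cons del: red.simps(2))
  finally show ?case .
qed

lemma hom_cancel: "hom f (winv a @ a @ b) = hom f b"
  by (metis hom_red red_cancel_l)
lemma hom_cancel2: "hom f (a @ winv a @ b) = hom f b"
  by (metis hom_red red_cancel_r)

lemma hom_mult: "hom f (mult u v) = mult (hom f u) (hom f v)"
  by (simp add: mult_def hom_red hom_append)

lemma hom_single: "hom f [x] = red (img f x)" by (simp add: hom_alt)

definition Lc :: "('a::finite \<Rightarrow> 'a word) \<Rightarrow> nat" where
  "Lc f = (\<Sum>x\<in>UNIV. length (img f x))"

lemma img_le_Lc: "length (img f x) \<le> Lc f"
  unfolding Lc_def by (rule member_le_sum) auto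

lemma hom_lip: "length (hom f w) \<le> Lc f * length w"
proof -
  have "length (concat (map (img f) w)) \<le> Lc f * length w"
  proof (induction w)
    case (Cons x w) then show ?case using img_le_Lc[of f x] by simp
  qed simp
  then show ?thesis unfolding hom_alt using length_red_le order_trans by blast
qed

lemma hom_single_le: "length (hom f [x]) \<le> Lc f"
  using hom_lip[of f "[x]"] by simp

lemma key_finite:
  fixes f :: "'a::finite \<Rightarrow> 'a word"
  assumes "inj_endo f"
  shows "\<exists>M. \<forall>w. reduced w \<longrightarrow> length (hom f w) \<le> R \<longrightarrow> length w \<le> M"
proof -
  let ?S = "{w. reduced w \<and> length (hom f w) \<le> R}"
  have "hom f ` ?S \<subseteq> {xs. set xs \<subseteq> UNIV \<and> length xs \<le> R}" by auto
  moreover have "finite {xs :: 'a word. set xs \<subseteq> UNIV \<and> length xs \<le> R}"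
    by (rule finite_lists_length_le) simp
  ultimately have "finite (hom f ` ?S)" by (rule finite_subset)
  moreover have "inj_on (hom f) ?S" using assms unfolding inj_endo_def FG_def
    by (rule inj_on_subset) auto
  ultimately have "finite ?S" using finite_imageD by blast
  then have "finite (length ` ?S)" by simp
  then obtain M where "\<forall>n\<in>length ` ?S. n \<le> M" using finite_nat_set_iff_bounded_le by blast
  then show ?thesis by auto
qed


lemma reduced_take: "reduced w \<Longrightarrow> reduced (take n w)"
  by (metis append_take_drop_id reduced_append)
lemma reduced_drop: "reduced w \<Longrightarrow> reduced (drop n w)"
  by (metis append_take_drop_id reduced_append)

lemma lcpl_prefix1[simp]: "lcpl p (p @ b) = length p"
  using lcpl_append_same[of p "[]" b] by simp
lemma lcpl_prefix2[simp]: "lcpl (p @ b) p = length p"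
  using lcpl_append_same[of p b "[]"] by simp

lemma path_lemma:
  assumes "\<forall>i<m. dd (g i) (g (Suc i)) \<le> L" "g 0 = []" "\<forall>i\<le>m. reduced (g i)" "p \<le> length (g m)"
  shows "\<exists>i\<le>m. dd (take p (g m)) (g i) \<le> L"
  using assms
proof (induction m arbitrary: p)
  case 0 then show ?case by simp
next
  case (Suc m)
  define c where "c = lcpl (g m) (g (Suc m))"
  show ?case
  proof (cases "p \<le> c")
    case True
    then have "p \<le> length (g m)" "take p (g (Suc m)) = take p (g m)"
      using lcpl_ge_iff[of c "g m" "g (Suc m)"] by (auto simp: c_def) (metis min.absorb1 take_take)
    then show ?thesis using Suc.IH[of p] Suc.prems by (metis le_SucI less_SucI)
  next
    case False
    define P where "P = take p (g (Suc m))"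
    have lP: "length P = p" using Suc.prems by (simp add: P_def)
    have "c \<le> lcpl P (g m)"
      unfolding lcpl_ge_iff using False lcpl_ge_iff[of c "g m" "g (Suc m)"]
      by (auto simp: c_def P_def lP)
    moreover have "\<not> Suc c \<le> lcpl P (g m)"
    proof
      assume "Suc c \<le> lcpl P (g m)"
      then have "Suc c \<le> length (g m)" "take (Suc c) (g m) = take (Suc c) (g (Suc m))" "Suc c \<le> length (g (Suc m))"
        unfolding lcpl_ge_iff using False Suc.prems by (auto simp: P_def)
      then have "Suc c \<le> c" unfolding c_def using lcpl_ge_iff by blast
      then show False by simp
    qed
    ultimately have lc: "lcpl P (g m) = c" by simp
    have rP: "reduced P" using Suc.prems by (simp add: P_def reduced_take)
    have "dd P (g m) = p + length (g m) - 2 * c"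
      using dd_formula[OF rP, of "g m"] Suc.prems lc lP by simp
    also have "\<dots> \<le> length (g m) + length (g (Suc m)) - 2 * c" using Suc.prems by simp
    also have "\<dots> = dd (g m) (g (Suc m))" using dd_formula[of "g m" "g (Suc m)"] Suc.prems by (simp add: c_def)
    also have "\<dots> \<le> L" using Suc.prems by simp
    finally show ?thesis by (auto simp: P_def intro: exI[of _ m])
  qed
qed

lemma dd_hom: "dd (hom f a) (hom f b) = length (hom f (winv a @ b))"
  by (simp add: dd_def hom_append hom_winv)

definition bclc :: "('a \<Rightarrow> 'a word) \<Rightarrow> nat \<Rightarrow> bool" where
  "bclc f C \<longleftrightarrow> (\<forall>u v. reduced (u @ v) \<longrightarrow> (\<exists>U' T V'. hom f u = U' @ T \<and> hom f v = winv T @ V'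
       \<and> hom f (u @ v) = U' @ V' \<and> length T \<le> C))"

lemma bcl:
  fixes f :: "'a::finite \<Rightarrow> 'a word"
  assumes "inj_endo f"
  shows "\<exists>C. bclc f C"
proof -
  define L where "L = Lc f"
  obtain M where M: "\<And>w. reduced w \<Longrightarrow> length (hom f w) \<le> 2 * L \<Longrightarrow> length w \<le> M"
    using key_finite[OF assms, of "2 * L"] by blast
  have "bclc f (L + L * M)" unfolding bclc_def
  proof (intro allI impI)
    fix u v :: "'a word" assume ruv: "reduced (u @ v)"
    then have ru: "reduced u" and rv: "reduced v" using reduced_append by blast+
    define U where "U = hom f u"
    define V where "V = hom f v"
    obtain U' T V' where d: "U = U' @ T" "V = winv T @ V'" "red (U @ V) = U' @ V'" "reduced (U' @ V')"
      using canc_decomp[of U V] by (auto simp: U_def V_def)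
    have huv: "hom f (u @ v) = U' @ V'" using d by (simp add: hom_append U_def V_def)
    have rU': "reduced U'" using d reduced_append by blast
    define g where "g i = hom f (take i u)" for i
    have gsteps: "\<forall>i<length u. dd (g i) (g (Suc i)) \<le> L"
    proof (intro allI impI)
      fix i assume "i < length u"
      then have "take (Suc i) u = take i u @ [u ! i]" by (simp add: take_Suc_conv_app_nth)
      then have "dd (g i) (g (Suc i)) = length (hom f [u ! i])"
        by (simp add: g_def dd_hom hom_cancel[where b="[u ! i]", simplified])
      then show "dd (g i) (g (Suc i)) \<le> L" using hom_single_le by (simp add: L_def)
    qed
    have "length U' \<le> length (g (length u))" using d by (simp add: g_def U_def)
    then obtain i where i: "i \<le> length u" "dd (take (length U') (g (length u))) (g i) \<le> L"
      using path_lemma[OF gsteps, of "length U'"] by (auto simp: g_def)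
    have "take (length U') (g (length u)) = U'" using d by (simp add: g_def U_def)
    with i have i2: "dd U' (g i) \<le> L" by simp
    define h where "h j = hom f (take j v)" for j
    have hsteps: "\<forall>j<length v. dd (h j) (h (Suc j)) \<le> L"
    proof (intro allI impI)
      fix j assume "j < length v"
      then have "take (Suc j) v = take j v @ [v ! j]" by (simp add: take_Suc_conv_app_nth)
      then have "dd (h j) (h (Suc j)) = length (hom f [v ! j])"
        by (simp add: h_def dd_hom hom_cancel[where b="[v ! j]", simplified])
      then show "dd (h j) (h (Suc j)) \<le> L" using hom_single_le by (simp add: L_def)
    qed
    have "length T \<le> length (h (length v))" using d by (simp add: h_def V_def)
    then obtain j where j: "j \<le> length v" "dd (take (length T) (h (length v))) (h j) \<le> L"
      using path_lemma[OF hsteps, of "length T"] by (auto simp: h_def)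
    have "take (length T) (h (length v)) = winv T" using d by (simp add: h_def V_def)
    with j have j2: "dd (winv T) (h j) \<le> L" by simp
    have "red (U @ winv T) = U'" using d rU' by (simp add: red_cancel_r2[where b="[]", simplified] red_id)
    then have j3: "dd U' (red (U @ h j)) \<le> L" using j2 dd_left[of U "winv T" "h j"] by simp
    have "dd (g i) (red (U @ h j)) \<le> 2 * L" using dd_triangle[of "g i" "red (U @ h j)" U'] i2 j3 dd_comm[of U' "g i"] by simp
    moreover have "dd (g i) (red (U @ h j)) = length (hom f (drop i u @ take j v))"
    proof -
      have "dd (g i) (red (U @ h j)) = dd (g i) (hom f (u @ take j v))" by (simp add: U_def h_def hom_append)
      also have "\<dots> = length (hom f (winv (take i u) @ u @ take j v))" by (simp add: g_def dd_hom)
      also have "\<dots> = length (hom f (drop i u @ take j v))"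
        by (metis append_take_drop_id append.assoc hom_cancel)
      finally show ?thesis .
    qed
    moreover have "reduced (drop i u @ take j v)"
    proof -
      have "u @ v = take i u @ (drop i u @ take j v) @ drop j v" by simp
      then show ?thesis using ruv reduced_append by metis
    qed
    ultimately have "length (drop i u @ take j v) \<le> M" using M[of "drop i u @ take j v"] by (simp add: L_def)
    then have di: "length u - i \<le> M" by simp
    have "length T = dd U' U"
      using dd_formula[OF rU', of U] d by (simp add: U_def)
    also have "\<dots> \<le> dd U' (g i) + dd (g i) U" by (rule dd_triangle)
    also have "dd (g i) U = length (hom f (drop i u))"
      by (metis U_def append_take_drop_id dd_hom g_def hom_cancel append_Nil2 append.assoc)
    also have "\<dots> \<le> L * (length u - i)" using hom_lip[of f "drop i u"] by (simp add: L_def mult.commute)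
    also have "\<dots> \<le> L * M" using di by simp
    finally have "length T \<le> L + L * M" using i2 by simp
    then show "\<exists>U' T V'. hom f u = U' @ T \<and> hom f v = winv T @ V' \<and> hom f (u @ v) = U' @ V' \<and> length T \<le> L + L * M"
      using d huv by (auto simp: U_def V_def)
  qed
  then show ?thesis by blast
qed

lemma bclc_mono: "bclc f C \<Longrightarrow> C \<le> C' \<Longrightarrow> bclc f C'"
  unfolding bclc_def by (meson order_trans)

lemma bclc_prefix:
  assumes "bclc f C" "reduced (u @ v)"
  shows "length (hom f u) - C \<le> lcpl (hom f u) (hom f (u @ v))"
proof -
  obtain U' T V' where d: "hom f u = U' @ T" "hom f v = winv T @ V'" "hom f (u @ v) = U' @ V'" "length T \<le> C"
    using assms unfolding bclc_def by blast
  have "length U' \<le> lcpl (hom f u) (hom f (u @ v))" using d by simp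
  then show ?thesis using d by simp
qed

lemma bclc_diverge:
  assumes "bclc f C" "reduced (winv a @ b)"
  shows "lcpl (hom f a) (hom f b) \<le> C"
proof -
  obtain U' T V' where d: "hom f (winv a) = U' @ T" "hom f b = winv T @ V'" "hom f (winv a @ b) = U' @ V'" "length T \<le> C"
    using assms unfolding bclc_def by blast
  have ra: "reduced a" "reduced b" using assms(2) by (auto simp: reduced_append)
  let ?A = "hom f a" and ?B = "hom f b"
  have e: "red (winv ?A @ ?B) = U' @ V'" using d by (simp add: hom_append hom_winv)
  have "length (red (winv ?A @ ?B)) = length ?A + length ?B - 2 * lcpl ?A ?B"
    using dd_formula[of ?A ?B] by (simp add: dd_def)
  moreover have "length ?A = length U' + length T"
    using arg_cong[OF d(1), of length] by (simp add: hom_winv)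
  moreover have "length ?B = length T + length V'" using d by simp
  ultimately have "lcpl ?A ?B = length T" using e lcpl_le1[of ?A ?B] lcpl_le2[of ?A ?B] by simp
  then show ?thesis using d by simp
qed


definition pre :: "(nat \<Rightarrow> 'b) \<Rightarrow> nat \<Rightarrow> 'b list" where
  "pre h k = map h [0..<k]"

definition shift :: "(nat \<Rightarrow> 'b) \<Rightarrow> nat \<Rightarrow> nat \<Rightarrow> 'b" where
  "shift h k = (\<lambda>i. h (k + i))"

lemma length_pre[simp]: "length (pre h k) = k" by (simp add: pre_def)
lemma nth_pre[simp]: "i < k \<Longrightarrow> pre h k ! i = h i" by (simp add: pre_def)
lemma pre_0[simp]: "pre h 0 = []" by (simp add: pre_def)
lemma pre_Suc: "pre h (Suc k) = pre h k @ [h k]" by (simp add: pre_def)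

lemma pre_add: "pre h (k + n) = pre h k @ pre (shift h k) n"
  by (induction n) (simp_all add: pre_Suc shift_def)

lemma take_pre: "n \<le> k \<Longrightarrow> take n (pre h k) = pre h n"
  by (simp add: pre_def take_map)

lemma reduced_pre: "valid (Inf h) \<Longrightarrow> reduced (pre h k)"
  by (simp add: reduced_def)

lemma valid_shift: "valid (Inf h) \<Longrightarrow> valid (Inf (shift h k))"
  by (simp add: shift_def)

definition px :: "'a fw \<Rightarrow> nat \<Rightarrow> 'a word" where
  "px x k = (case x of Fin w \<Rightarrow> take k w | Inf h \<Rightarrow> pre h k)"

lemma px_Fin[simp]: "px (Fin w) k = take k w" and px_Inf[simp]: "px (Inf h) k = pre h k"
  by (simp_all add: px_def)

lemma reduced_px: "valid x \<Longrightarrow> reduced (px x k)"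
  by (cases x) (auto simp: reduced_take reduced_pre)

lemma letter_at_px: "i < length (px x k) \<Longrightarrow> letter_at x i = Some (px x k ! i)"
  by (cases x) auto

lemma letter_at_Fin_less: "i < length w \<Longrightarrow> letter_at (Fin w) i = Some (w ! i)"
  by simp

definition agree :: "'a fw \<Rightarrow> 'a fw \<Rightarrow> nat \<Rightarrow> bool" where
  "agree x y n \<longleftrightarrow> (\<forall>i<n. letter_at x i = letter_at y i)"

lemma agree_mono: "agree x y n \<Longrightarrow> m \<le> n \<Longrightarrow> agree x y m"
  by (auto simp: agree_def)
lemma agree_sym: "agree x y n \<Longrightarrow> agree y x n"
  by (auto simp: agree_def)
lemma agree_trans: "agree x y n \<Longrightarrow> agree y z n \<Longrightarrow> agree x z n"
  by (auto simp: agree_def)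

lemma letter_at_eq: "(\<And>i. letter_at x i = letter_at y i) \<Longrightarrow> x = y"
proof (cases x; cases y)
  fix w w' assume e: "\<And>i. letter_at x i = letter_at y i" and xy: "x = Fin w" "y = Fin w'"
  have l: "length w = length w'"
  proof (rule ccontr)
    assume "length w \<noteq> length w'"
    then consider "length w < length w'" | "length w' < length w" by linarith
    then show False
    proof cases
      case 1 then show False using e[of "length w"] xy by simp
    next
      case 2 then show False using e[of "length w'"] xy by simp
    qed
  qed
  have "w = w'"
  proof (rule nth_equalityI)
    fix i assume "i < length w" then show "w ! i = w' ! i" using e[of i] xy l by simp
  qed (rule l)
  then show "x = y" using xy by simp
next
  fix w h assume e: "\<And>i. letter_at x i = letter_at y i" and xy: "x = Fin w" "y = Inf h"
  show "x = y" using e[of "length w"] xy by simp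
next
  fix w h assume e: "\<And>i. letter_at x i = letter_at y i" and xy: "x = Inf h" "y = Fin w"
  show "x = y" using e[of "length w"] xy by simp
next
  fix h h' assume e: "\<And>i. letter_at x i = letter_at y i" and xy: "x = Inf h" "y = Inf h'"
  then have "h = h'" by (metis letter_at.simps(2) option.inject ext)
  then show "x = y" using xy by simp
qed

lemma agree_all: "(\<And>n. agree x y n) \<Longrightarrow> x = y"
  by (rule letter_at_eq) (meson agree_def lessI)

lemma agree_px: "agree x y K \<Longrightarrow> px x K = px y K"
proof (cases x; cases y)
  fix w w' assume a: "agree x y K" and xy: "x = Fin w" "y = Fin w'"
  have a': "\<And>i. i < K \<Longrightarrow> (if i < length w then Some (w ! i) else None) = (if i < length w' then Some (w' ! i) else None)"
    using a xy unfolding agree_def by simp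
  have l: "min K (length w) = min K (length w')"
  proof (rule ccontr)
    assume "min K (length w) \<noteq> min K (length w')"
    then consider "length w < K \<and> length w < length w'" | "length w' < K \<and> length w' < length w" by linarith
    then show False
    proof cases
      case 1 then show False using a'[of "length w"] by simp
    next
      case 2 then show False using a'[of "length w'"] by simp
    qed
  qed
  show "px x K = px y K"
  proof (simp add: xy, rule nth_equalityI)
    show "length (take K w) = length (take K w')" using l by simp
    fix i assume i: "i < length (take K w)"
    then have "i < K" "i < length w" "i < length w'" using l by auto
    then show "take K w ! i = take K w' ! i" using a'[of i] by simp
  qed
next
  fix w h assume a: "agree x y K" and xy: "x = Fin w" "y = Inf h"
  have a': "\<And>i. i < K \<Longrightarrow> (if i < length w then Some (w ! i) else None) = Some (h i)"
    using a xy unfolding agree_def by simp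
  have l: "K \<le> length w"
  proof (rule ccontr)
    assume "\<not> K \<le> length w" then show False using a'[of "length w"] by simp
  qed
  show "px x K = px y K"
  proof (simp add: xy, rule nth_equalityI)
    show "length (take K w) = length (pre h K)" using l by simp
    fix i assume "i < length (take K w)"
    then have "i < K" "i < length w" using l by auto
    then show "take K w ! i = pre h K ! i" using a'[of i] by simp
  qed
next
  fix w h assume a: "agree x y K" and xy: "x = Inf h" "y = Fin w"
  have a': "\<And>i. i < K \<Longrightarrow> (if i < length w then Some (w ! i) else None) = Some (h i)"
    using a xy unfolding agree_def by (metis letter_at.simps)
  have l: "K \<le> length w"
  proof (rule ccontr)
    assume "\<not> K \<le> length w" then show False using a'[of "length w"] by simp
  qed
  show "px x K = px y K"
  proof (simp add: xy, rule nth_equalityI)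
    show "length (pre h K) = length (take K w)" using l by simp
    fix i assume "i < length (pre h K)"
    then have "i < K" "i < length w" using l by auto
    then show "pre h K ! i = take K w ! i" using a'[of i] by simp
  qed
next
  fix h h' assume a: "agree x y K" and xy: "x = Inf h" "y = Inf h'"
  show "px x K = px y K" using a xy unfolding agree_def
    by (simp add: pre_def)
qed

lemma agree_None: "agree a x n \<Longrightarrow> letter_at a m = None \<Longrightarrow> m < n \<Longrightarrow> a = x"
proof (rule letter_at_eq)
  fix i assume a: "agree a x n" "letter_at a m = None" "m < n"
  obtain w where aw: "a = Fin w" "length w \<le> m" using a(2) by (cases a) (auto split: if_splits)
  have "letter_at x m = None" using a unfolding agree_def by metis
  then obtain w' where xw: "x = Fin w'" "length w' \<le> m" by (cases x) (auto split: if_splits)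
  show "letter_at a i = letter_at x i"
  proof (cases "i < n")
    case True then show ?thesis using a unfolding agree_def by blast
  next
    case False then show ?thesis using aw xw a(3) by auto
  qed
qed

lemma lcp_props:
  assumes "x \<noteq> y"
  shows "agree x y (lcp x y)" "letter_at x (lcp x y) \<noteq> letter_at y (lcp x y)"
proof -
  have ex: "\<exists>i. letter_at x i \<noteq> letter_at y i" using assms letter_at_eq by blast
  show "letter_at x (lcp x y) \<noteq> letter_at y (lcp x y)" unfolding lcp_def by (rule LeastI_ex[OF ex])
  show "agree x y (lcp x y)" unfolding agree_def lcp_def using not_less_Least by blast
qed

lemma agree_iff_lcp: "agree x y n \<longleftrightarrow> (x = y \<or> n \<le> lcp x y)"
proof
  assume a: "agree x y n"
  show "x = y \<or> n \<le> lcp x y"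
  proof (rule ccontr)
    assume "\<not> (x = y \<or> n \<le> lcp x y)"
    then show False using lcp_props[of x y] a unfolding agree_def by auto
  qed
next
  assume "x = y \<or> n \<le> lcp x y"
  then show "agree x y n"
  proof (cases "x = y")
    case True then show ?thesis by (simp add: agree_def)
  next
    case False then show ?thesis using lcp_props(1)[OF False] agree_mono \<open>x = y \<or> n \<le> lcp x y\<close> by blast
  qed
qed

lemma lcp_comm: "lcp x y = lcp y x"
  unfolding lcp_def by (simp add: eq_commute)

lemma dpre_less_iff: "dpre x y < 2 powr - real n \<longleftrightarrow> agree x y (Suc n)"
proof (cases "x = y")
  case True then show ?thesis by (simp add: dpre_def agree_def)
next
  case False
  have d: "dpre x y = 2 powr - real (lcp x y)" using False by (simp add: dpre_def)
  have "(2::real) powr - real (lcp x y) < 2 powr - real n \<longleftrightarrow> - real (lcp x y) < - real n"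
    by (rule powr_less_cancel_iff) simp
  also have "\<dots> \<longleftrightarrow> Suc n \<le> lcp x y" by linarith
  finally show ?thesis using False agree_iff_lcp d by metis
qed

lemma dpre_le_agree: "agree x y n \<Longrightarrow> dpre x y \<le> 2 powr - real n"
proof -
  assume "agree x y n"
  then have "x = y \<or> n \<le> lcp x y" using agree_iff_lcp by blast
  then show ?thesis
  proof
    assume "x = y" then show ?thesis by (simp add: dpre_def)
  next
    assume n: "n \<le> lcp x y"
    have "dpre x y \<le> 2 powr - real (lcp x y)" by (simp add: dpre_def)
    also have "\<dots> \<le> 2 powr - real n" by (rule powr_mono) (use n in auto)
    finally show ?thesis .
  qed
qed

lemma exists_small: "0 < (e::real) \<Longrightarrow> \<exists>n. 2 powr - real n < e"
proof -
  assume e: "0 < e"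
  obtain n where n: "inverse e < 2 ^ n" using real_arch_pow[of 2 "inverse e"] by auto
  have "2 powr - real n = inverse (2 ^ n)" by (simp add: powr_minus powr_realpow)
  also have "\<dots> < inverse (inverse e)" by (rule less_imp_inverse_less[OF n]) (simp add: e)
  also have "\<dots> = e" by simp
  finally show ?thesis by blast
qed

lemma ms: "Metric_space hatF dpre"
proof
  fix x y show "0 \<le> dpre x y" by (simp add: dpre_def)
  show "dpre x y = dpre y x" by (simp add: dpre_def lcp_comm)
  show "dpre x y = 0 \<longleftrightarrow> x = y" by (simp add: dpre_def)
next
  fix x y z :: "'a fw"
  show "dpre x z \<le> dpre x y + dpre y z"
  proof (cases "x = y \<or> y = z \<or> x = z")
    case True then show ?thesis by (auto simp: dpre_def)
  next
    case False
    then have "agree x y (lcp x y)" "agree y z (lcp y z)" using lcp_props by auto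
    then have "agree x z (min (lcp x y) (lcp y z))" using agree_mono agree_trans by (meson min.cobounded1 min.cobounded2)
    then have "min (lcp x y) (lcp y z) \<le> lcp x z" using False agree_iff_lcp by blast
    then have "dpre x z \<le> 2 powr - real (min (lcp x y) (lcp y z))" using False by (simp add: dpre_def)
    also have "\<dots> \<le> dpre x y + dpre y z"
    proof -
      have d1: "dpre x y = 2 powr - real (lcp x y)" "dpre y z = 2 powr - real (lcp y z)"
        using False by (auto simp: dpre_def)
      have p: "0 \<le> (2::real) powr t" for t by simp
      show ?thesis
      proof (cases "lcp x y \<le> lcp y z")
        case True then have "min (lcp x y) (lcp y z) = lcp x y" by simp
        then show ?thesis unfolding d1 using p[of "- real (lcp y z)"] by simp
      next
        case False then have "min (lcp x y) (lcp y z) = lcp y z" by simp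
        then show ?thesis unfolding d1 using p[of "- real (lcp x y)"] by simp
      qed
    qed
    finally show ?thesis .
  qed
qed


definition Cb :: "('a::finite \<Rightarrow> 'a word) \<Rightarrow> nat" where
  "Cb f = (SOME C. bclc f C)"
definition Mb :: "('a::finite \<Rightarrow> 'a word) \<Rightarrow> nat \<Rightarrow> nat" where
  "Mb f R = (SOME M. \<forall>w. reduced w \<longrightarrow> length (hom f w) \<le> R \<longrightarrow> length w \<le> M)"
definition Nb :: "('a::finite \<Rightarrow> 'a word) \<Rightarrow> nat \<Rightarrow> nat" where
  "Nb f n = Suc (Mb f (n + Cb f))"

lemma Cb: "inj_endo f \<Longrightarrow> bclc f (Cb f)"
  unfolding Cb_def by (rule someI_ex[OF bcl])

lemma Mb: "inj_endo f \<Longrightarrow> reduced w \<Longrightarrow> length (hom f w) \<le> R \<Longrightarrow> length w \<le> Mb f R"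
proof -
  assume a: "inj_endo f" "reduced w" "length (hom f w) \<le> R"
  have "\<forall>w. reduced w \<longrightarrow> length (hom f w) \<le> R \<longrightarrow> length w \<le> Mb f R"
    unfolding Mb_def by (rule someI_ex[OF key_finite[OF a(1)]])
  then show ?thesis using a by blast
qed

lemma Nb_long: "inj_endo f \<Longrightarrow> reduced w \<Longrightarrow> Nb f n \<le> length w \<Longrightarrow> n + Cb f < length (hom f w)"
  using Mb[of f w "n + Cb f"] unfolding Nb_def by linarith

lemma lcpl_nth: "i < lcpl a b \<Longrightarrow> a ! i = b ! i"
  by (metis lcpl_take nth_take)

lemma pre_split: "k \<le> K \<Longrightarrow> pre h K = pre h k @ pre (shift h k) (K - k)"
  using pre_add[of h k "K - k"] by simp

definition extf :: "('a::finite \<Rightarrow> 'a word) \<Rightarrow> 'a fw \<Rightarrow> 'a fw" where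
  "extf f x = (if valid x then (case x of Fin w \<Rightarrow> Fin (hom f w)
       | Inf h \<Rightarrow> Inf (\<lambda>i. hom f (pre h (Nb f i)) ! i)) else Fin [])"

lemma extf_Fin: "reduced w \<Longrightarrow> extf f (Fin w) = Fin (hom f w)"
  by (simp add: extf_def)

lemma hom_pre_agree:
  assumes "inj_endo f" "valid (Inf h)" "k \<le> K" "i + Cb f < length (hom f (pre h k))"
  shows "hom f (pre h K) ! i = hom f (pre h k) ! i" "i < length (hom f (pre h K))"
proof -
  have "reduced (pre h k @ pre (shift h k) (K - k))"
    using pre_split[OF assms(3)] reduced_pre[OF assms(2)] by metis
  then have "length (hom f (pre h k)) - Cb f \<le> lcpl (hom f (pre h k)) (hom f (pre h K))"
    using bclc_prefix[OF Cb[OF assms(1)]] pre_split[OF assms(3)] by metis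
  then have il: "i < lcpl (hom f (pre h k)) (hom f (pre h K))" using assms(4) by linarith
  then show "hom f (pre h K) ! i = hom f (pre h k) ! i" using lcpl_nth by metis
  show "i < length (hom f (pre h K))" using il lcpl_le2 less_le_trans by blast
qed

lemma extf_agree:
  assumes "inj_endo f" "valid x" "i + Cb f < length (hom f (px x k))"
  shows "letter_at (extf f x) i = Some (hom f (px x k) ! i)"
proof (cases x)
  case (Fin w)
  have rw: "reduced (take k w @ drop k w)" using assms Fin by simp
  have "length (hom f (take k w)) - Cb f \<le> lcpl (hom f (take k w)) (hom f (take k w @ drop k w))"
    by (rule bclc_prefix[OF Cb[OF assms(1)] rw])
  then have il: "i < lcpl (hom f (take k w)) (hom f w)" using assms(3) Fin by simp
  then have "i < length (hom f w)" using lcpl_le2 less_le_trans by blast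
  then show ?thesis using il Fin assms lcpl_nth[OF il] by (simp add: extf_def)
next
  case (Inf h)
  define K where "K = max k (Nb f i)"
  have v: "valid (Inf h)" using assms Inf by simp
  have e1: "hom f (pre h K) ! i = hom f (pre h k) ! i"
    using hom_pre_agree(1)[OF assms(1) v, of k K i] assms(3) Inf by (simp add: K_def)
  have l2: "i + Cb f < length (hom f (pre h (Nb f i)))"
    using Nb_long[OF assms(1) reduced_pre[OF v], of i "Nb f i"] by simp
  have e2: "hom f (pre h K) ! i = hom f (pre h (Nb f i)) ! i"
    using hom_pre_agree(1)[OF assms(1) v _ l2, of K] by (simp add: K_def)
  show ?thesis using e1 e2 Inf v by (simp add: extf_def)
qed

lemma length_px_le: "length (px x K) \<le> K"
  by (cases x) auto

lemma extf_valid: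
  assumes "inj_endo f" "valid x" shows "valid (extf f x)"
proof (cases x)
  case (Fin w) then show ?thesis using assms by (simp add: extf_def)
next
  case (Inf h)
  have v: "valid (Inf h)" using assms Inf by simp
  obtain g where g: "extf f x = Inf g" using Inf v by (simp add: extf_def)
  have "g (Suc i) \<noteq> inv1 (g i)" for i
  proof -
    define K where "K = Nb f (Suc i)"
    have l: "Suc i + Cb f < length (hom f (px x K))"
      using Nb_long[OF assms(1) reduced_pre[OF v], of "Suc i" K] Inf by (simp add: K_def)
    have a1: "letter_at (extf f x) (Suc i) = Some (hom f (px x K) ! Suc i)"
      using extf_agree[OF assms l] .
    have a0: "letter_at (extf f x) i = Some (hom f (px x K) ! i)"
      using extf_agree[OF assms, of i K] l by simp
    have "reduced (hom f (px x K))" by simp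
    then have "hom f (px x K) ! Suc i \<noteq> inv1 (hom f (px x K) ! i)"
      using l unfolding reduced_def by simp
    then show ?thesis using a0 a1 g by simp
  qed
  then show ?thesis using g by simp
qed

lemma extf_cont:
  assumes inj: "inj_endo f"
  shows "continuous_map Ttop Ttop (extf f)"
  unfolding Ttop_def
proof (subst Metric_space.metric_continuous_map[OF ms ms], intro conjI ballI allI impI)
  show "extf f ` hatF \<subseteq> hatF" using extf_valid[OF inj] by (auto simp: hatF_def)
next
  fix a :: "'a fw" and e :: real assume a: "a \<in> hatF" and e: "0 < e"
  obtain n where n: "2 powr - real n < e" using exists_small[OF e] by blast
  define K where "K = Nb f n"
  show "\<exists>\<delta>>0. \<forall>x. x \<in> hatF \<and> dpre a x < \<delta> \<longrightarrow> dpre (extf f a) (extf f x) < e"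
  proof (intro exI[of _ "2 powr - real K"] conjI allI impI)
    show "0 < (2::real) powr - real K" by simp
    fix x assume x: "x \<in> hatF \<and> dpre a x < 2 powr - real K"
    then have ag: "agree a x (Suc K)" using dpre_less_iff by blast
    then have "agree a x K" by (rule agree_mono) simp
    then have pe: "px a K = px x K" by (rule agree_px)
    have va: "valid a" "valid x" using a x by (auto simp: hatF_def)
    show "dpre (extf f a) (extf f x) < e"
    proof (cases "length (px a K) = K")
      case True
      have l: "n + Cb f < length (hom f (px a K))"
        using Nb_long[OF inj reduced_px[OF va(1)], of n K] True by (simp add: K_def)
      have "agree (extf f a) (extf f x) (Suc n)" unfolding agree_def
      proof (intro allI impI)
        fix i assume "i < Suc n"
        then have li: "i + Cb f < length (hom f (px a K))" using l by simp
        show "letter_at (extf f a) i = letter_at (extf f x) i"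
          using extf_agree[OF inj va(1) li] extf_agree[OF inj va(2), of i K] li pe by simp
      qed
      then have "dpre (extf f a) (extf f x) < 2 powr - real n" by (simp only: dpre_less_iff)
      then show ?thesis using n by linarith
    next
      case False
      then have lt: "length (px a K) < K" using length_px_le le_neq_implies_less by blast
      then obtain w where aw: "a = Fin w" "length w < K" by (cases a) auto
      have "letter_at a (length w) = None" using aw by simp
      then have "a = x" using agree_None[OF ag, of "length w"] aw by simp
      then show ?thesis using e by (simp add: dpre_def)
    qed
  qed
qed

lemma hatHom_eq:
  assumes inj: "inj_endo f"
  shows "hatHom f = extf f"
  unfolding hatHom_def
proof (rule the_equality)
  show "continuous_map Ttop Ttop (extf f) \<and> (\<forall>w\<in>FG. extf f (Fin w) = Fin (hom f w)) \<and> (\<forall>x. x \<notin> hatF \<longrightarrow> extf f x = Fin [])"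
    using extf_cont[OF inj] by (auto simp: extf_def FG_def hatF_def)
next
  fix P assume P: "continuous_map Ttop Ttop P \<and> (\<forall>w\<in>FG. P (Fin w) = Fin (hom f w)) \<and> (\<forall>x. x \<notin> hatF \<longrightarrow> P x = Fin [])"
  have cont: "\<forall>a\<in>hatF. \<forall>e>0. \<exists>\<delta>>0. \<forall>x. x \<in> hatF \<and> dpre a x < \<delta> \<longrightarrow> dpre (P a) (P x) < e"
    using P unfolding Ttop_def by (subst (asm) Metric_space.metric_continuous_map[OF ms ms]) blast
  show "P = extf f"
  proof
    fix x
    show "P x = extf f x"
    proof (cases "valid x")
      case False then show ?thesis using P by (simp add: extf_def hatF_def)
    next
      case True
      show ?thesis
      proof (cases x)
        case (Fin w) then show ?thesis using P True by (simp add: extf_def FG_def)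
      next
        case (Inf h)
        show ?thesis
        proof (rule agree_all)
          fix n
          have xh: "x \<in> hatF" using True by (simp add: hatF_def)
          obtain \<delta> where d: "\<delta> > 0" "\<forall>y. y \<in> hatF \<and> dpre x y < \<delta> \<longrightarrow> dpre (P x) (P y) < 2 powr - real n"
            proof -
            have "(0::real) < 2 powr - real n" by simp
            then show ?thesis using cont xh that by blast
          qed
          obtain m where m: "2 powr - real m < \<delta>" using exists_small[OF d(1)] by blast
          define K where "K = max m (Nb f n)"
          define y where "y = Fin (pre h K)"
          have v: "valid (Inf h)" using True Inf by simp
          have yh: "y \<in> hatF" using reduced_pre[OF v] by (simp add: y_def hatF_def)
          have "agree x y K" using Inf by (simp add: agree_def y_def)
          then have "dpre x y \<le> 2 powr - real K" by (rule dpre_le_agree)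
          also have "\<dots> \<le> 2 powr - real m" by (rule powr_mono) (auto simp: K_def)
          finally have "dpre x y < \<delta>" using m by linarith
          then have "dpre (P x) (P y) < 2 powr - real n" using d yh by blast
          then have "agree (P x) (P y) (Suc n)" by (simp only: dpre_less_iff)
          then have a1: "agree (P x) (P y) n" by (rule agree_mono) simp
          have Py: "P y = Fin (hom f (pre h K))" using P reduced_pre[OF v] by (simp add: y_def FG_def)
          have l: "n + Cb f < length (hom f (pre h K))"
            using Nb_long[OF inj reduced_pre[OF v], of n K] by (simp add: K_def)
          have a2: "agree (extf f x) (P y) n" unfolding agree_def Py
          proof (intro allI impI)
            fix i assume "i < n"
            then have li: "i + Cb f < length (hom f (px x K))" using l Inf by simp
            show "letter_at (extf f x) i = letter_at (Fin (hom f (pre h K))) i"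
              using extf_agree[OF inj True li] li Inf by simp
          qed
          show "agree (P x) (extf f x) n" using agree_trans[OF a1 agree_sym[OF a2]] .
        qed
      qed
    qed
  qed
qed


lemma pre_Suc_Cons: "pre h (Suc c) = h 0 # pre (shift h 1) c"
  by (induction c) (auto simp: pre_Suc shift_def)

lemma shift_shift: "shift (shift h a) b = shift h (a + b)"
  by (simp add: shift_def add.assoc)

lemma canc_struct:
  "canc r h = (r', h') \<Longrightarrow> \<exists>c. r = map inv1 (pre h c) @ r' \<and> h' = shift h c \<and> (r' = [] \<or> h' 0 \<noteq> inv1 (hd r'))"
proof (induction r h rule: canc.induct)
  case (1 h) then show ?case by (intro exI[of _ 0]) (auto simp: shift_def)
next
  case (2 x r h)
  show ?case
  proof (cases "h 0 = inv1 x")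
    case True
    have sh: "(\<lambda>i. h (Suc i)) = shift h 1" by (simp add: shift_def)
    have "canc r (shift h 1) = (r', h')" using 2(2) True sh by simp
    then obtain c where c: "r = map inv1 (pre (shift h 1) c) @ r'" "h' = shift (shift h 1) c" "r' = [] \<or> h' 0 \<noteq> inv1 (hd r')"
      using 2(1)[OF True] sh by auto
    show ?thesis
      using c True by (intro exI[of _ "Suc c"]) (simp add: pre_Suc_Cons shift_shift)
  next
    case False
    then show ?thesis using 2(2) by (intro exI[of _ 0]) (auto simp: shift_def)
  qed
qed

lemma pre_prepend: "pre (prepend a g) (length a + n) = a @ pre g n"
  by (rule nth_equalityI) (auto simp: prepend_def nth_append)

lemma valid_from_pre: "(\<And>n. \<exists>N\<ge>n. reduced (pre g N)) \<Longrightarrow> valid (Inf g)"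
proof -
  assume a: "\<And>n. \<exists>N\<ge>n. reduced (pre g N)"
  have "g (Suc i) \<noteq> inv1 (g i)" for i
  proof -
    obtain N where N: "N \<ge> Suc (Suc i)" "reduced (pre g N)" using a by blast
    then show ?thesis unfolding reduced_def by (metis Suc_le_lessD nth_pre length_pre Suc_lessD)
  qed
  then show ?thesis by simp
qed

lemma act_char:
  assumes v: "valid (Inf h)"
  shows "\<exists>h2. act u (Inf h) = Inf h2 \<and> valid (Inf h2) \<and>
     (\<forall>K\<ge>length (red u). red (u @ pre h K) = pre h2 (length (red (u @ pre h K)))
        \<and> K \<le> length (red (u @ pre h K)) + length (red u))"
proof -
  define ru where "ru = red u"
  obtain r' h' where ch: "canc (rev ru) h = (r', h')" by (metis surj_pair)
  obtain c where c: "rev ru = map inv1 (pre h c) @ r'" "h' = shift h c" "r' = [] \<or> h' 0 \<noteq> inv1 (hd r')"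
    using canc_struct[OF ch] by blast
  define a where "a = rev r'"
  have ru: "ru = a @ winv (pre h c)"
    using arg_cong[OF c(1), of rev] by (simp add: a_def winv_def)
  have act: "act u (Inf h) = Inf (prepend a h')" using ch by (simp add: ru_def a_def)
  have ra: "reduced a" using ru reduced_append ru_def red_reduced by metis
  have vh': "valid (Inf h')" using v c(2) valid_shift by simp
  have lc: "c \<le> length ru" using ru by simp
  have main: "red (u @ pre h K) = pre (prepend a h') (length a + (K - c))" if K: "K \<ge> length ru" for K
  proof -
    have ck: "c \<le> K" using lc K by simp
    have "red (u @ pre h K) = red (ru @ pre h K)" by (simp add: ru_def)
    also have "\<dots> = red (a @ winv (pre h c) @ pre h c @ pre h' (K - c))"
      using pre_split[OF ck, of h] ru c(2) by simp
    also have "\<dots> = red (a @ pre h' (K - c))" by (rule red_cancel_l2)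
    also have "\<dots> = a @ pre h' (K - c)"
    proof (rule red_id)
      have "hd (pre h' (K - c)) \<noteq> inv1 (last a)" if "a \<noteq> []" "pre h' (K - c) \<noteq> []"
      proof -
        have "r' \<noteq> []" using that a_def by simp
        then have "h' 0 \<noteq> inv1 (hd r')" using c(3) by simp
        moreover have "hd (pre h' (K - c)) = h' 0" using that by (simp add: pre_def hd_map)
        moreover have "last a = hd r'" using \<open>r' \<noteq> []\<close> by (simp add: a_def last_rev)
        ultimately show ?thesis by simp
      qed
      then show "reduced (a @ pre h' (K - c))" using ra reduced_pre[OF vh'] reduced_append by blast
    qed
    also have "\<dots> = pre (prepend a h') (length a + (K - c))" by (simp add: pre_prepend)
    finally show ?thesis .
  qed
  have valid2: "valid (Inf (prepend a h'))"
  proof (rule valid_from_pre)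
    fix n
    show "\<exists>N\<ge>n. reduced (pre (prepend a h') N)"
      using main[of "n + length ru"] red_reduced[of "u @ pre h (n + length ru)"] lc
      by (intro exI[of _ "length a + (n + length ru - c)"]) auto
  qed
  show ?thesis
  proof (intro exI[of _ "prepend a h'"] conjI allI impI)
    show "act u (Inf h) = Inf (prepend a h')" by (rule act)
    show "valid (Inf (prepend a h'))" by (rule valid2)
    fix K assume K: "length (red u) \<le> K"
    then show "red (u @ pre h K) = pre (prepend a h') (length (red (u @ pre h K)))"
      using main[of K] by (simp add: ru_def)
    show "K \<le> length (red (u @ pre h K)) + length (red u)"
      using main[of K] K lc by (simp add: ru_def)
  qed
qed

lemma act_valid: "valid (Inf h) \<Longrightarrow> \<exists>h2. act u (Inf h) = Inf h2 \<and> valid (Inf h2)"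
  using act_char by blast

lemma pre_eq_nth: "pre g N = pre g' N \<Longrightarrow> i < N \<Longrightarrow> g i = g' i"
  by (metis nth_pre)

lemma act_ident:
  assumes v: "valid (Inf h)"
    and H: "\<And>n. \<exists>K\<ge>length (red u). n \<le> length (red (u @ pre h K)) \<and> red (u @ pre h K) = pre g (length (red (u @ pre h K)))"
  shows "act u (Inf h) = Inf g"
proof -
  obtain h2 where h2: "act u (Inf h) = Inf h2"
    "\<forall>K\<ge>length (red u). red (u @ pre h K) = pre h2 (length (red (u @ pre h K))) \<and> K \<le> length (red (u @ pre h K)) + length (red u)"
    using act_char[OF v, of u] by blast
  have "h2 i = g i" for i
  proof -
    obtain K where K: "K \<ge> length (red u)" "Suc i \<le> length (red (u @ pre h K))" "red (u @ pre h K) = pre g (length (red (u @ pre h K)))"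
      using H by blast
    then have "pre h2 (length (red (u @ pre h K))) = pre g (length (red (u @ pre h K)))" using h2(2) by metis
    then show ?thesis using K(2) pre_eq_nth by (metis Suc_le_lessD)
  qed
  then show ?thesis using h2 by auto
qed

lemma act_comp:
  assumes v: "valid (Inf h)"
  shows "act (mult u v) (Inf h) = act u (act v (Inf h))"
proof -
  obtain h1 where h1: "act v (Inf h) = Inf h1" "valid (Inf h1)"
    "\<forall>K\<ge>length (red v). red (v @ pre h K) = pre h1 (length (red (v @ pre h K))) \<and> K \<le> length (red (v @ pre h K)) + length (red v)"
    using act_char[OF v, of v] by blast
  obtain h2 where h2: "act u (Inf h1) = Inf h2"
    "\<forall>K\<ge>length (red u). red (u @ pre h1 K) = pre h2 (length (red (u @ pre h1 K))) \<and> K \<le> length (red (u @ pre h1 K)) + length (red u)"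
    using act_char[OF h1(2), of u] by blast
  have "act (mult u v) (Inf h) = Inf h2"
  proof (rule act_ident[OF v])
    fix n
    define K where "K = n + length (red u) + length (red v) + length (red (mult u v))"
    define L1 where "L1 = length (red (v @ pre h K))"
    have e1: "red (v @ pre h K) = pre h1 L1" and l1: "K \<le> L1 + length (red v)"
      using h1(3) by (auto simp: K_def L1_def)
    have L1u: "length (red u) \<le> L1" using l1 by (simp add: K_def)
    have e2: "red (u @ pre h1 L1) = pre h2 (length (red (u @ pre h1 L1)))" and l2: "L1 \<le> length (red (u @ pre h1 L1)) + length (red u)"
      using h2(2) L1u by auto
    have eq: "red (mult u v @ pre h K) = red (u @ pre h1 L1)"
    proof -
      have "red (mult u v @ pre h K) = red (u @ v @ pre h K)" by (simp add: mult_def)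
      also have "\<dots> = red (u @ red (v @ pre h K))" by simp
      finally show ?thesis using e1 by simp
    qed
    show "\<exists>K\<ge>length (red (mult u v)). n \<le> length (red (mult u v @ pre h K)) \<and> red (mult u v @ pre h K) = pre h2 (length (red (mult u v @ pre h K)))"
      using eq e2 l1 l2 by (intro exI[of _ K]) (auto simp: K_def)
  qed
  then show ?thesis using h1 h2 by simp
qed

lemma act_red: "act (red u) (Inf h) = act u (Inf h)" by simp

lemma act_winv_pre:
  assumes v: "valid (Inf h)"
  shows "act (winv (pre h i)) (Inf h) = Inf (shift h i)"
proof (rule act_ident[OF v])
  fix n
  have r: "red (winv (pre h i)) = winv (pre h i)" using reduced_pre[OF v] by (simp add: red_id)
  have e: "red (winv (pre h i) @ pre h (n + i)) = pre (shift h i) n"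
  proof -
    have "red (winv (pre h i) @ pre h (n + i)) = red (winv (pre h i) @ pre h i @ pre (shift h i) n)"
      using pre_add[of h i n] by (simp add: add.commute)
    also have "\<dots> = red (pre (shift h i) n)" by (rule red_cancel_l)
    also have "\<dots> = pre (shift h i) n" using reduced_pre[OF valid_shift[OF v]] by (simp add: red_id)
    finally show ?thesis .
  qed
  show "\<exists>K\<ge>length (red (winv (pre h i))). n \<le> length (red (winv (pre h i) @ pre h K)) \<and>
          red (winv (pre h i) @ pre h K) = pre (shift h i) (length (red (winv (pre h i) @ pre h K)))"
    using e r by (intro exI[of _ "n + i"]) simp
qed

lemma act_prepend:
  assumes vg: "valid (Inf (prepend b g))" and v: "valid (Inf g)"
  shows "act b (Inf g) = Inf (prepend b g)"
proof (rule act_ident[OF v])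
  fix n
  have pb: "pre (prepend b g) (length b + n) = b @ pre g n" by (rule pre_prepend)
  have rb: "reduced (b @ pre g n)" using reduced_pre[OF vg, of "length b + n"] pb by simp
  then have e: "red (b @ pre g n) = b @ pre g n" by (rule red_id)
  have "reduced b" using rb reduced_append by blast
  then have r: "red b = b" by (rule red_id)
  show "\<exists>K\<ge>length (red b). n \<le> length (red (b @ pre g K)) \<and> red (b @ pre g K) = pre (prepend b g) (length (red (b @ pre g K)))"
  proof (intro exI[of _ "n + length b"] conjI)
    have rb2: "reduced (b @ pre g (n + length b))" using reduced_pre[OF vg, of "length b + (n + length b)"] pre_prepend[of b g "n + length b"] by simp
    then have e2: "red (b @ pre g (n + length b)) = b @ pre g (n + length b)" by (rule red_id)
    show "length (red b) \<le> n + length b" using r by simp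
    show "n \<le> length (red (b @ pre g (n + length b)))" using e2 by simp
    show "red (b @ pre g (n + length b)) = pre (prepend b g) (length (red (b @ pre g (n + length b))))"
      using e2 pre_prepend[of b g "n + length b"] by simp
  qed
qed

lemma prepend_pre_shift: "prepend (pre h j) (shift h j) = h"
  by (rule ext) (simp add: prepend_def shift_def)

lemma Eq_mult: "u \<in> Eq f g \<Longrightarrow> v \<in> Eq f g \<Longrightarrow> mult u v \<in> Eq f g"
  using hom_mult[of f u v] hom_mult[of g u v] by (simp add: Eq_def FG_def mult_def)

lemma Eq_winv: "u \<in> Eq f g \<Longrightarrow> winv u \<in> Eq f g"
  by (simp add: Eq_def FG_def hom_winv)

lemma orbit_act:
  assumes v: "valid (Inf h)" and w: "w \<in> Eq f g"
  shows "orbit f g (act w (Inf h)) = orbit f g (Inf h)"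
proof
  show "orbit f g (act w (Inf h)) \<subseteq> orbit f g (Inf h)"
  proof
    fix y assume "y \<in> orbit f g (act w (Inf h))"
    then obtain u where u: "u \<in> Eq f g" "y = act u (act w (Inf h))" by (auto simp: orbit_def)
    then have "y = act (mult u w) (Inf h)" using act_comp[OF v] by simp
    then show "y \<in> orbit f g (Inf h)" using Eq_mult[OF u(1) w] by (auto simp: orbit_def)
  qed
next
  show "orbit f g (Inf h) \<subseteq> orbit f g (act w (Inf h))"
  proof
    fix y assume "y \<in> orbit f g (Inf h)"
    then obtain u where u: "u \<in> Eq f g" "y = act u (Inf h)" by (auto simp: orbit_def)
    have "mult (mult u (winv w)) w = red u"
      using red_cancel_l2[of u w "[]"] by (simp add: mult_def)
    then have "act u (Inf h) = act (mult (mult u (winv w)) w) (Inf h)" by simp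
    also have "\<dots> = act (mult u (winv w)) (act w (Inf h))" by (rule act_comp[OF v])
    finally have "y = act (mult u (winv w)) (act w (Inf h))" using u by simp
    then show "y \<in> orbit f g (act w (Inf h))" using Eq_mult[OF u(1) Eq_winv[OF w]] by (auto simp: orbit_def)
  qed
qed


definition zw :: "('a \<Rightarrow> 'a word) \<Rightarrow> ('a \<Rightarrow> 'a word) \<Rightarrow> 'a word \<Rightarrow> 'a word" where
  "zw f g a = red (winv (hom g a) @ hom f a)"

lemma zw_Nil[simp]: "zw f g [] = []" by (simp add: zw_def)

lemma zw_append: "zw f g (a @ s) = red (winv (hom g s) @ zw f g a @ hom f s)"
proof -
  have "zw f g (a @ s) = red (red (winv (hom g s) @ winv (hom g a)) @ red (hom f a @ hom f s))"
    by (simp add: zw_def hom_append red_winv[symmetric] winv_append)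
  also have "\<dots> = red (winv (hom g s) @ winv (hom g a) @ hom f a @ hom f s)"
    by (metis append.assoc red_append)
  also have "\<dots> = red (winv (hom g s) @ zw f g a @ hom f s)"
    unfolding zw_def using red_mid[of "winv (hom g s)" "winv (hom g a) @ hom f a" "hom f s"] by simp
  finally show ?thesis .
qed

lemma zw_step_le:
  fixes f g :: "'a::finite \<Rightarrow> 'a word"
  shows "length (zw f g (a @ [x])) \<le> length (zw f g a) + 2 * max (Lc f) (Lc g)"
proof -
  have "length (zw f g (a @ [x])) \<le> length (winv (hom g [x]) @ zw f g a @ hom f [x])"
    unfolding zw_append by (rule length_red_le)
  also have "\<dots> \<le> Lc g + length (zw f g a) + Lc f"
    using hom_single_le[of g x] hom_single_le[of f x] by simp
  finally show ?thesis by simp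
qed

lemma zw_Eq:
  assumes "reduced a" "reduced b" "zw f g a = zw f g b"
  shows "mult b (winv a) \<in> Eq f g"
proof -
  let ?Pa = "hom f a" and ?Qa = "hom g a" and ?Pb = "hom f b" and ?Qb = "hom g b"
  have "hom f (mult b (winv a)) = red (?Pb @ winv ?Pa)" by (simp only: hom_mult) (simp add: hom_winv mult_def)
  also have "\<dots> = red (?Qb @ winv ?Qb @ ?Pb @ winv ?Pa)" by (simp add: red_cancel_r)
  also have "\<dots> = red (?Qb @ red (winv ?Qb @ ?Pb) @ winv ?Pa)" by (simp add: red_mid)
  also have "\<dots> = red (?Qb @ red (winv ?Qa @ ?Pa) @ winv ?Pa)" using assms(3) by (simp add: zw_def)
  also have "\<dots> = red (?Qb @ winv ?Qa @ ?Pa @ winv ?Pa)" by (simp add: red_mid)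
  also have "\<dots> = red (?Qb @ winv ?Qa)" using red_cancel_r2[of "?Qb @ winv ?Qa" ?Pa "[]"] by simp
  also have "\<dots> = hom g (mult b (winv a))" by (simp only: hom_mult) (simp add: hom_winv mult_def)
  finally show ?thesis using assms by (simp add: Eq_def FG_def mult_def)
qed

definition lg :: "(nat \<Rightarrow> 'b) \<Rightarrow> 'b list \<Rightarrow> nat" where
  "lg \<gamma> w = lcpl w (pre \<gamma> (length w))"

lemma lg_ge_iff: "n \<le> lg \<gamma> w \<longleftrightarrow> n \<le> length w \<and> take n w = pre \<gamma> n"
  unfolding lg_def lcpl_ge_iff by (auto simp: take_pre)

lemma lg_le: "lg \<gamma> w \<le> length w" using lg_ge_iff by blast

lemma lg_neq: "lg \<gamma> w < length w \<Longrightarrow> w ! lg \<gamma> w \<noteq> \<gamma> (lg \<gamma> w)"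
  using lcpl_neq[of w "pre \<gamma> (length w)"] unfolding lg_def by simp

lemma lg_take: "take (lg \<gamma> w) w = pre \<gamma> (lg \<gamma> w)" using lg_ge_iff by blast

lemma lcpl_lg_le: "min (lg \<gamma> X) (lg \<gamma> Y) \<le> lcpl X Y"
proof -
  let ?n = "min (lg \<gamma> X) (lg \<gamma> Y)"
  have "?n \<le> lg \<gamma> X" "?n \<le> lg \<gamma> Y" by auto
  then show ?thesis unfolding lcpl_ge_iff lg_ge_iff by auto
qed

lemma lcpl_lg_lt: "lg \<gamma> X < lg \<gamma> Y \<Longrightarrow> lcpl X Y = lg \<gamma> X"
proof -
  assume lt: "lg \<gamma> X < lg \<gamma> Y"
  let ?a = "lg \<gamma> X"
  have ge: "?a \<le> lcpl X Y" using lcpl_lg_le[of \<gamma> X Y] lt by simp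
  have "\<not> Suc ?a \<le> lcpl X Y"
  proof
    assume s: "Suc ?a \<le> lcpl X Y"
    then have lX: "?a < length X" and lY: "?a < length Y" using lcpl_le1[of X Y] lcpl_le2[of X Y] by auto
    have "X ! ?a = Y ! ?a" using s lcpl_nth by (metis Suc_le_lessD)
    moreover have "Y ! ?a = \<gamma> ?a"
    proof -
      have "take (lg \<gamma> Y) Y = pre \<gamma> (lg \<gamma> Y)" by (rule lg_take)
      then show ?thesis using lt by (metis nth_take nth_pre)
    qed
    moreover have "X ! ?a \<noteq> \<gamma> ?a" using lg_neq lX by blast
    ultimately show False by simp
  qed
  then show ?thesis using ge by simp
qed

lemma lcpl_lg_eq: "lg \<gamma> X \<noteq> lg \<gamma> Y \<Longrightarrow> lcpl X Y = min (lg \<gamma> X) (lg \<gamma> Y)"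
  by (metis lcpl_comm lcpl_lg_lt linorder_neqE_nat min.absorb1 min.absorb2 order.strict_implies_order)

lemma share:
  assumes rA: "reduced A" and rB: "reduced B" and rA': "reduced A'"
    and lt1: "lg \<gamma> A < lg \<gamma> B" and lt2: "lg \<gamma> B \<le> lg \<gamma> A'" and lB: "length B \<le> lg \<gamma> B + C"
  shows "length (red (winv A @ B)) - C \<le> lcpl (red (winv A @ A')) (red (winv A @ B))"
proof -
  let ?q = "lg \<gamma> A" and ?p = "lg \<gamma> B"
  have c1: "lcpl A B = ?q" using lcpl_lg_lt[OF lt1] .
  have c2: "lcpl A A' = ?q" using lcpl_lg_lt[of \<gamma> A A'] lt1 lt2 by simp
  have e1: "red (winv A @ B) = winv (drop ?q A) @ drop ?q B" using dist_formula[OF rA rB] c1 by simp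
  have e2: "red (winv A @ A') = winv (drop ?q A) @ drop ?q A'" using dist_formula[OF rA rA'] c2 by simp
  have "?p - ?q \<le> lcpl (drop ?q A') (drop ?q B)"
  proof -
    have tB: "take ?p B = pre \<gamma> ?p" and lpB: "?p \<le> length B" using lg_ge_iff[of ?p \<gamma> B] by auto
    have tA: "take ?p A' = pre \<gamma> ?p" and lpA: "?p \<le> length A'" using lg_ge_iff[of ?p \<gamma> A'] lt2 by auto
    have "take (?p - ?q) (drop ?q B) = drop ?q (take ?p B)" using lt1 by (simp add: take_drop)
    moreover have "take (?p - ?q) (drop ?q A') = drop ?q (take ?p A')" using lt1 by (simp add: take_drop)
    ultimately show ?thesis unfolding lcpl_ge_iff using tA tB lpA lpB by (simp add: diff_le_mono)
  qed
  then have "length (drop ?q A) + (?p - ?q) \<le> lcpl (red (winv A @ A')) (red (winv A @ B))"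
    unfolding e1 e2 using lcpl_append_same[of "winv (drop ?q A)" "drop ?q A'" "drop ?q B"] by simp
  moreover have "length (red (winv A @ B)) = length (drop ?q A) + length (drop ?q B)" using e1 by simp
  moreover have "?q \<le> length A" using lg_le by blast
  ultimately show ?thesis using lB lt1 by simp
qed

lemma closure_crit:
  assumes v: "valid (Inf h)" and H: "\<And>n. \<exists>w\<in>Eq f g. agree (Fin w) (Inf h) n"
  shows "Inf h \<in> Ttop closure_of (Fin ` Eq f g)"
  unfolding Ttop_def Metric_space.metric_closure_of[OF ms]
proof (intro CollectI conjI allI impI)
  show "Inf h \<in> hatF" using v by (simp add: hatF_def)
  fix r :: real assume r: "0 < r"
  obtain n where n: "2 powr - real n < r" using exists_small[OF r] by blast
  obtain w where w: "w \<in> Eq f g" "agree (Fin w) (Inf h) n" using H by blast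
  have "dpre (Inf h) (Fin w) \<le> 2 powr - real n" using dpre_le_agree[OF agree_sym[OF w(2)]] .
  then have "dpre (Inf h) (Fin w) < r" using n by linarith
  moreover have "Fin w \<in> hatF" using w by (simp add: Eq_def FG_def hatF_def)
  ultimately show "\<exists>y\<in>Fin ` Eq f g. y \<in> Metric_space.mball hatF dpre (Inf h) r"
    using w \<open>Inf h \<in> hatF\<close> by (auto simp: Metric_space.in_mball[OF ms])
qed

lemma mult_pre_agree:
  assumes v: "valid (Inf h)" and ij: "i \<le> j"
  shows "agree (Fin (mult (pre h j) (winv (pre h i)))) (Inf h) (j - i)"
proof -
  obtain u' t v' where d: "pre h j = u' @ t" "winv (pre h i) = winv t @ v'"
      "red (pre h j @ winv (pre h i)) = u' @ v'"
    using canc_decomp[OF reduced_pre[OF v] reduced_winv[OF reduced_pre[OF v]]] by blast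
  have "length t \<le> i" using arg_cong[OF d(2), of length] by simp
  then have lu: "j - i \<le> length u'" using arg_cong[OF d(1), of length] by simp
  show ?thesis unfolding agree_def
  proof (intro allI impI)
    fix k assume k: "k < j - i"
    then have "k < length u'" using lu by simp
    moreover have "u' ! k = h k" using d(1) k \<open>k < length u'\<close>
      by (metis nth_append nth_pre length_append less_le_trans le_add1 diff_le_self ij lu)
    ultimately show "letter_at (Fin (mult (pre h j) (winv (pre h i)))) k = letter_at (Inf h) k"
      using d(3) by (simp add: mult_def nth_append)
  qed
qed


definition CC :: "('a::finite \<Rightarrow> 'a word) \<Rightarrow> ('a \<Rightarrow> 'a word) \<Rightarrow> nat" where
  "CC f g = max (Cb f) (Cb g)"
definition LL :: "('a::finite \<Rightarrow> 'a word) \<Rightarrow> ('a \<Rightarrow> 'a word) \<Rightarrow> nat" where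
  "LL f g = max (Lc f) (Lc g)"
definition TT :: "('a::finite \<Rightarrow> 'a word) \<Rightarrow> ('a \<Rightarrow> 'a word) \<Rightarrow> nat" where
  "TT f g = 2 * LL f g + 4 * CC f g + 1"
definition gam :: "('a::finite \<Rightarrow> 'a word) \<Rightarrow> (nat \<Rightarrow> 'a letter) \<Rightarrow> nat \<Rightarrow> 'a letter" where
  "gam f h = (\<lambda>i. hom f (pre h (Nb f i)) ! i)"
definition agreeG :: "('a \<Rightarrow> 'a word) \<Rightarrow> (nat \<Rightarrow> 'a letter) \<Rightarrow> (nat \<Rightarrow> 'a letter) \<Rightarrow> nat \<Rightarrow> bool" where
  "agreeG \<phi> h \<gamma> C \<longleftrightarrow> (\<forall>k i. i + C < length (hom \<phi> (pre h k)) \<longrightarrow> \<gamma> i = hom \<phi> (pre h k) ! i)"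

lemma extf_Inf: "valid (Inf h) \<Longrightarrow> extf f (Inf h) = Inf (gam f h)"
  by (simp add: extf_def gam_def)

lemma agreeG_gam:
  assumes "inj_endo f" "valid (Inf h)" "Cb f \<le> C"
  shows "agreeG f h (gam f h) C"
  unfolding agreeG_def
proof (intro allI impI)
  fix k i assume "i + C < length (hom f (pre h k))"
  then have "i + Cb f < length (hom f (px (Inf h) k))" using assms(3) by simp
  from extf_agree[OF assms(1,2) this] show "gam f h i = hom f (pre h k) ! i"
    using extf_Inf[OF assms(2), of f] by simp
qed

lemma lg_big:
  assumes "agreeG \<phi> h \<gamma> C"
  shows "length (hom \<phi> (pre h k)) \<le> lg \<gamma> (hom \<phi> (pre h k)) + C"
proof -
  let ?w = "hom \<phi> (pre h k)"
  let ?n = "length ?w - C"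
  have "take ?n ?w = pre \<gamma> ?n"
  proof (rule nth_equalityI)
    show "length (take ?n ?w) = length (pre \<gamma> ?n)" by simp
    fix i assume "i < length (take ?n ?w)"
    then have "i + C < length ?w" by simp
    then show "take ?n ?w ! i = pre \<gamma> ?n ! i" using assms unfolding agreeG_def by auto
  qed
  then have "?n \<le> lg \<gamma> ?w" unfolding lg_ge_iff by simp
  then show ?thesis by simp
qed

lemma zw_len: "length (zw f g a) = length (hom g a) + length (hom f a) - 2 * lcpl (hom g a) (hom f a)"
  unfolding zw_def using dd_formula[of "hom g a" "hom f a"] by (simp add: dd_def)

lemma lg_equal_small:
  assumes "agreeG f h \<gamma> C" "agreeG g h \<gamma> C"
    and "lg \<gamma> (hom g (pre h k)) = lg \<gamma> (hom f (pre h k))"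
  shows "length (zw f g (pre h k)) \<le> 2 * C"
proof -
  let ?P = "hom f (pre h k)" and ?Q = "hom g (pre h k)"
  have "lg \<gamma> ?Q \<le> lcpl ?Q ?P" using lcpl_lg_le[of \<gamma> ?Q ?P] assms(3) by simp
  moreover have "length ?P \<le> lg \<gamma> ?P + C" "length ?Q \<le> lg \<gamma> ?Q + C" using lg_big assms(1,2) by blast+
  moreover have "lcpl ?Q ?P \<le> length ?Q" "lcpl ?Q ?P \<le> length ?P" using lcpl_le1 lcpl_le2 by blast+
  ultimately show ?thesis unfolding zw_len using assms(3) by linarith
qed

lemma hom_len_step:
  shows "length (hom f (pre h (Suc k))) \<le> length (hom f (pre h k)) + Lc f"
    and "length (hom f (pre h k)) \<le> length (hom f (pre h (Suc k))) + Lc f"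
proof -
  have e: "hom f (pre h (Suc k)) = red (hom f (pre h k) @ hom f [h k])" by (simp add: pre_Suc hom_append)
  show "length (hom f (pre h (Suc k))) \<le> length (hom f (pre h k)) + Lc f"
    unfolding e using length_red_le[of "hom f (pre h k) @ hom f [h k]"] hom_single_le[of f "h k"] by simp
  show "length (hom f (pre h k)) \<le> length (hom f (pre h (Suc k))) + Lc f"
    unfolding e using length_red_app_ge[of "hom f (pre h k)" "hom f [h k]"] hom_single_le[of f "h k"] by simp
qed

definition sgn :: "('a::finite \<Rightarrow> 'a word) \<Rightarrow> ('a \<Rightarrow> 'a word) \<Rightarrow> (nat \<Rightarrow> 'a letter) \<Rightarrow> nat \<Rightarrow> bool" where
  "sgn f g h k \<longleftrightarrow> lg (gam f h) (hom g (pre h k)) < lg (gam f h) (hom f (pre h k))"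

lemma no_flip:
  fixes f g :: "'a::finite \<Rightarrow> 'a word"
  assumes af: "agreeG f h \<gamma> (CC f g)" and ag: "agreeG g h \<gamma> (CC f g)"
    and big: "length (zw f g (pre h k)) > TT f g" "length (zw f g (pre h (Suc k))) > TT f g"
  shows "(lg \<gamma> (hom g (pre h (Suc k))) < lg \<gamma> (hom f (pre h (Suc k)))) = (lg \<gamma> (hom g (pre h k)) < lg \<gamma> (hom f (pre h k)))"
proof -
  define C where "C = CC f g"
  define L where "L = LL f g"
  let ?P = "hom f (pre h k)" and ?Q = "hom g (pre h k)"
  let ?P' = "hom f (pre h (Suc k))" and ?Q' = "hom g (pre h (Suc k))"
  define p where "p = lg \<gamma> ?P"
  define q where "q = lg \<gamma> ?Q"
  define p' where "p' = lg \<gamma> ?P'"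
  define q' where "q' = lg \<gamma> ?Q'"
  have TT: "TT f g = 2 * L + 4 * C + 1" by (simp add: TT_def C_def L_def)
  have ne: "p \<noteq> q" "p' \<noteq> q'"
    using lg_equal_small[OF af ag, of k] lg_equal_small[OF af ag, of "Suc k"] big
    unfolding p_def q_def p'_def q'_def TT_def by auto
  have b1: "length ?P \<le> p + C" "length ?Q \<le> q + C" "length ?P' \<le> p' + C" "length ?Q' \<le> q' + C"
    using lg_big[OF af] lg_big[OF ag] by (auto simp: p_def q_def p'_def q'_def C_def)
  have b2: "p \<le> length ?P" "q \<le> length ?Q" "p' \<le> length ?P'" "q' \<le> length ?Q'"
    using lg_le by (auto simp: p_def q_def p'_def q'_def)
  have b3: "length ?P' \<le> length ?P + L" "length ?P \<le> length ?P' + L"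
    "length ?Q' \<le> length ?Q + L" "length ?Q \<le> length ?Q' + L"
    using hom_len_step[of f h k] hom_len_step[of g h k] by (auto simp: L_def LL_def)
  have lc: "lcpl ?Q ?P = min q p" using lcpl_lg_eq[of \<gamma> ?Q ?P] ne by (simp add: p_def q_def)
  have z: "length (zw f g (pre h k)) + 2 * min q p = length ?Q + length ?P"
    unfolding zw_len lc[symmetric] using lcpl_le1[of ?Q ?P] lcpl_le2[of ?Q ?P] by simp
  have "(q' < p') = (q < p)"
  proof (rule ccontr)
    assume fl: "(q' < p') \<noteq> (q < p)"
    then consider "q < p" "p' < q'" | "p < q" "q' < p'" using ne unfolding p_def q_def p'_def q'_def by linarith
    then show False
    proof cases
      case 1
      then have "length (zw f g (pre h k)) < 2 * L + 4 * C" using z b1 b2 b3 by (simp add: min_def; linarith)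
      then show False using big TT by linarith
    next
      case 2
      then have "length (zw f g (pre h k)) < 2 * L + 4 * C" using z b1 b2 b3 by (simp add: min_def; linarith)
      then show False using big TT by linarith
    qed
  qed
  then show ?thesis by (simp add: p_def q_def p'_def q'_def)
qed


lemma hd_pre: "0 < m \<Longrightarrow> hd (pre g m) = g 0"
  by (simp add: pre_def hd_map upt_conv_Cons)

lemma hom_shift: "k \<le> K \<Longrightarrow> red (winv (hom \<phi> (pre h k)) @ hom \<phi> (pre h K)) = hom \<phi> (pre (shift h k) (K - k))"
proof -
  assume kK: "k \<le> K"
  have "red (winv (hom \<phi> (pre h k)) @ hom \<phi> (pre h K)) = hom \<phi> (winv (pre h k) @ pre h K)"
    by (simp add: hom_append hom_winv)
  also have "\<dots> = hom \<phi> (winv (pre h k) @ pre h k @ pre (shift h k) (K - k))" by (subst pre_split[OF kK, of h]) (rule refl)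
  also have "\<dots> = hom \<phi> (pre (shift h k) (K - k))" by (rule hom_cancel)
  finally show ?thesis .
qed

lemma share_app:
  assumes inj1: "inj_endo \<phi>1" and v: "valid (Inf h)" and a1: "agreeG \<phi>1 h \<gamma> C" and a2: "agreeG \<phi>2 h \<gamma> C"
    and cb: "Cb \<phi>1 \<le> C"
    and lt: "lg \<gamma> (hom \<phi>1 (pre h k)) < lg \<gamma> (hom \<phi>2 (pre h k))"
  shows "\<exists>m\<ge>1. length (red (winv (hom \<phi>1 (pre h k)) @ hom \<phi>2 (pre h k))) - C
      \<le> lcpl (hom \<phi>1 (pre (shift h k) m)) (red (winv (hom \<phi>1 (pre h k)) @ hom \<phi>2 (pre h k)))"
proof -
  define p where "p = lg \<gamma> (hom \<phi>2 (pre h k))"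
  define K where "K = k + 1 + Nb \<phi>1 (p + C)"
  have "p + C + Cb \<phi>1 < length (hom \<phi>1 (pre h K))"
    using Nb_long[OF inj1 reduced_pre[OF v], of "p + C" K] by (simp add: K_def)
  then have "p < lg \<gamma> (hom \<phi>1 (pre h K))" using lg_big[OF a1, of K] by simp
  then have sh: "length (red (winv (hom \<phi>1 (pre h k)) @ hom \<phi>2 (pre h k))) - C
      \<le> lcpl (red (winv (hom \<phi>1 (pre h k)) @ hom \<phi>1 (pre h K))) (red (winv (hom \<phi>1 (pre h k)) @ hom \<phi>2 (pre h k)))"
    using share[OF hom_reduced[of \<phi>1 "pre h k"] hom_reduced[of \<phi>2 "pre h k"] hom_reduced[of \<phi>1 "pre h K"] lt, of C] lg_big[OF a2, of k]
    by (simp add: p_def)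
  have "red (winv (hom \<phi>1 (pre h k)) @ hom \<phi>1 (pre h K)) = hom \<phi>1 (pre (shift h k) (K - k))"
    by (rule hom_shift) (simp add: K_def)
  then show ?thesis using sh by (intro exI[of _ "K - k"]) (simp add: K_def)
qed

lemma diverge_contra:
  assumes inj1: "inj_endo \<phi>1" and cb1: "bclc \<phi>1 C" and cb: "Cb \<phi>1 \<le> C"
    and v: "valid (Inf h)" and v': "valid (Inf h')"
    and a1: "agreeG \<phi>1 h \<gamma> C" and a2: "agreeG \<phi>2 h \<gamma> C"
    and a1': "agreeG \<phi>1 h' \<gamma>' C" and a2': "agreeG \<phi>2 h' \<gamma>' C"
    and lt: "lg \<gamma> (hom \<phi>1 (pre h k)) < lg \<gamma> (hom \<phi>2 (pre h k))"
    and lt': "lg \<gamma>' (hom \<phi>1 (pre h' k')) < lg \<gamma>' (hom \<phi>2 (pre h' k'))"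
    and eqz: "red (winv (hom \<phi>1 (pre h k)) @ hom \<phi>2 (pre h k)) = red (winv (hom \<phi>1 (pre h' k')) @ hom \<phi>2 (pre h' k'))"
    and neq: "h k \<noteq> h' k'"
  shows "length (red (winv (hom \<phi>1 (pre h k)) @ hom \<phi>2 (pre h k))) \<le> 2 * C"
proof -
  define z where "z = red (winv (hom \<phi>1 (pre h k)) @ hom \<phi>2 (pre h k))"
  obtain m where m: "m \<ge> 1" "length z - C \<le> lcpl (hom \<phi>1 (pre (shift h k) m)) z"
    using share_app[OF inj1 v a1 a2 cb lt] by (auto simp: z_def)
  obtain m' where m': "m' \<ge> 1" "length z - C \<le> lcpl (hom \<phi>1 (pre (shift h' k') m')) z"
    using share_app[OF inj1 v' a1' a2' cb lt'] eqz by (auto simp: z_def)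
  define a where "a = pre (shift h k) m"
  define b where "b = pre (shift h' k') m'"
  have ra: "reduced a" "reduced b" using reduced_pre[OF valid_shift[OF v]] reduced_pre[OF valid_shift[OF v']] by (auto simp: a_def b_def)
  have "length a \<ge> 1" "length b \<ge> 1" using m(1) m'(1) by (simp_all add: a_def b_def)
  then have ne: "a \<noteq> []" "b \<noteq> []" by auto
  have "hd a = h k" using hd_pre[of m "shift h k"] m(1) by (simp add: a_def shift_def)
  moreover have "hd b = h' k'" using hd_pre[of m' "shift h' k'"] m'(1) by (simp add: b_def shift_def)
  ultimately have "hd b \<noteq> inv1 (last (winv a))" using neq ne by (simp add: last_winv)
  then have rab: "reduced (winv a @ b)" using ra ne by (simp add: reduced_append)
  have "lcpl (hom \<phi>1 a) (hom \<phi>1 b) \<le> C" by (rule bclc_diverge[OF cb1 rab])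
  moreover have "min (lcpl (hom \<phi>1 a) z) (lcpl z (hom \<phi>1 b)) \<le> lcpl (hom \<phi>1 a) (hom \<phi>1 b)" by (rule lcpl_min)
  moreover have "lcpl z (hom \<phi>1 b) = lcpl (hom \<phi>1 b) z" by (rule lcpl_comm)
  ultimately have "length z - C \<le> C" using m(2) m'(2) by (simp add: a_def b_def)
  then show ?thesis by (simp add: z_def)
qed

lemma zw_swap: "red (winv (hom f a) @ hom g a) = winv (zw f g a)"
  by (simp add: zw_def red_winv[symmetric] winv_append)

definition i0 :: "('a::finite \<Rightarrow> 'a word) \<Rightarrow> ('a \<Rightarrow> 'a word) \<Rightarrow> (nat \<Rightarrow> 'a letter) \<Rightarrow> nat" where
  "i0 f g h = Suc (Max {k. length (zw f g (pre h k)) \<le> TT f g})"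

definition good :: "('a::finite \<Rightarrow> 'a word) \<Rightarrow> ('a \<Rightarrow> 'a word) \<Rightarrow> (nat \<Rightarrow> 'a letter) \<Rightarrow> bool" where
  "good f g h \<longleftrightarrow> valid (Inf h) \<and> gam f h = gam g h \<and> Inf h \<notin> Ttop closure_of (Fin ` Eq f g)"

context
  fixes f g :: "'a::finite \<Rightarrow> 'a word"
  assumes injf: "inj_endo f" and injg: "inj_endo g"
begin

lemma bclcs: "bclc f (CC f g)" "bclc g (CC f g)"
  using bclc_mono[OF Cb[OF injf]] bclc_mono[OF Cb[OF injg]] by (auto simp: CC_def)

lemma agreeGs:
  assumes "good f g h"
  shows "agreeG f h (gam f h) (CC f g)" "agreeG g h (gam f h) (CC f g)"
  using agreeG_gam[OF injf, of h "CC f g"] agreeG_gam[OF injg, of h "CC f g"] assms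
  by (auto simp: good_def CC_def)

lemma reg_Inf:
  assumes "\<alpha> \<in> regular f g"
  shows "\<exists>h. \<alpha> = Inf h \<and> good f g h"
proof (cases \<alpha>)
  case (Fin w)
  have a: "\<alpha> \<in> hatF" "hatHom f \<alpha> = hatHom g \<alpha>" "\<alpha> \<notin> Ttop closure_of (Fin ` Eq f g)"
    using assms by (auto simp: regular_def EqHat_def)
  then have rw: "reduced w" using Fin by (simp add: hatF_def)
  have "hom f w = hom g w" using a(2) Fin rw by (simp add: hatHom_eq[OF injf] hatHom_eq[OF injg] extf_Fin)
  then have "w \<in> Eq f g" using rw by (simp add: Eq_def FG_def)
  moreover have "Fin ` Eq f g \<subseteq> topspace Ttop"
  proof -
    have "Fin ` Eq f g \<subseteq> hatF" by (auto simp: Eq_def FG_def hatF_def)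
    then show ?thesis by (simp add: Ttop_def Metric_space.topspace_mtopology[OF ms])
  qed
  ultimately have "\<alpha> \<in> Ttop closure_of (Fin ` Eq f g)" using closure_of_subset Fin by blast
  then show ?thesis using a by blast
next
  case (Inf h)
  have a: "\<alpha> \<in> hatF" "hatHom f \<alpha> = hatHom g \<alpha>" "\<alpha> \<notin> Ttop closure_of (Fin ` Eq f g)"
    using assms by (auto simp: regular_def EqHat_def)
  then have v: "valid (Inf h)" using Inf by (simp add: hatF_def)
  have "gam f h = gam g h" using a(2) Inf v by (simp add: hatHom_eq[OF injf] hatHom_eq[OF injg] extf_Inf)
  then show ?thesis using a v Inf by (auto simp: good_def)
qed

lemma fin_same:
  assumes "good f g h"
  shows "finite {j. zw f g (pre h j) = zw f g (pre h i)}"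
proof (rule ccontr)
  assume inf: "infinite {j. zw f g (pre h j) = zw f g (pre h i)}"
  have v: "valid (Inf h)" using assms by (simp add: good_def)
  have "\<exists>w\<in>Eq f g. agree (Fin w) (Inf h) n" for n
  proof -
    obtain j where j: "j \<in> {j. zw f g (pre h j) = zw f g (pre h i)}" "i + n \<le> j"
      using inf unfolding infinite_nat_iff_unbounded_le by blast
    have "mult (pre h j) (winv (pre h i)) \<in> Eq f g"
      using zw_Eq[OF reduced_pre[OF v] reduced_pre[OF v]] j(1) by simp
    moreover have "agree (Fin (mult (pre h j) (winv (pre h i)))) (Inf h) n"
      using mult_pre_agree[OF v, of i j] j(2) agree_mono by fastforce
    ultimately show ?thesis by blast
  qed
  then have "Inf h \<in> Ttop closure_of (Fin ` Eq f g)" using closure_crit[OF v] by blast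
  then show False using assms by (simp add: good_def)
qed

lemma fin_level:
  assumes "good f g h"
  shows "finite {k. length (zw f g (pre h k)) \<le> T}"
proof -
  have fin: "finite {v :: 'a word. set v \<subseteq> UNIV \<and> length v \<le> T}" by (rule finite_lists_length_le) simp
  have "{k. length (zw f g (pre h k)) \<le> T} \<subseteq> (\<Union>v\<in>{v. set v \<subseteq> UNIV \<and> length v \<le> T}. {k. zw f g (pre h k) = v})"
    by auto
  moreover have "finite {k. zw f g (pre h k) = v}" for v
  proof (cases "\<exists>i. zw f g (pre h i) = v")
    case True
    then obtain i where "zw f g (pre h i) = v" by blast
    then show ?thesis using fin_same[OF assms, of i] by simp
  next
    case False then show ?thesis by simp
  qed
  ultimately show ?thesis using fin by (meson finite_UN_I finite_subset)
qed

lemma i0_props: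
  assumes "good f g h"
  shows "\<And>k. i0 f g h \<le> k \<Longrightarrow> TT f g < length (zw f g (pre h k))"
    and "length (zw f g (pre h (i0 f g h))) \<le> TT f g + 2 * LL f g"
proof -
  define S where "S = {k. length (zw f g (pre h k)) \<le> TT f g}"
  have fS: "finite S" using fin_level[OF assms] by (simp add: S_def)
  have 0: "0 \<in> S" by (simp add: S_def)
  have i0: "i0 f g h = Suc (Max S)" by (simp add: i0_def S_def)
  fix k assume "i0 f g h \<le> k"
  then have "k \<notin> S" using Max_ge[OF fS] i0 by fastforce
  then show "TT f g < length (zw f g (pre h k))" by (simp add: S_def)
next
  define S where "S = {k. length (zw f g (pre h k)) \<le> TT f g}"
  have fS: "finite S" using fin_level[OF assms] by (simp add: S_def)
  have 0: "0 \<in> S" by (simp add: S_def)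
  have i0: "i0 f g h = Suc (Max S)" by (simp add: i0_def S_def)
  have "Max S \<in> S" using Max_in[OF fS] 0 by blast
  then have "length (zw f g (pre h (Max S))) \<le> TT f g" by (simp add: S_def)
  moreover have "length (zw f g (pre h (Max S) @ [h (Max S)])) \<le> length (zw f g (pre h (Max S))) + 2 * LL f g"
    using zw_step_le by (simp add: LL_def)
  ultimately show "length (zw f g (pre h (i0 f g h))) \<le> TT f g + 2 * LL f g"
    by (simp add: i0 pre_Suc)
qed

lemma sgn_const:
  assumes "good f g h"
  shows "sgn f g h (i0 f g h + n) = sgn f g h (i0 f g h)"
proof (induction n)
  case 0 then show ?case by simp
next
  case (Suc n)
  have "sgn f g h (Suc (i0 f g h + n)) = sgn f g h (i0 f g h + n)"
    unfolding sgn_def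
    by (rule no_flip[OF agreeGs[OF assms]]) (use i0_props(1)[OF assms] in auto)
  then show ?case using Suc by simp
qed

lemma lg_ne:
  assumes "good f g h" "i0 f g h \<le> k"
  shows "lg (gam f h) (hom g (pre h k)) \<noteq> lg (gam f h) (hom f (pre h k))"
proof
  assume "lg (gam f h) (hom g (pre h k)) = lg (gam f h) (hom f (pre h k))"
  then have "length (zw f g (pre h k)) \<le> 2 * CC f g" using lg_equal_small[OF agreeGs[OF assms(1)]] by blast
  then show False using i0_props(1)[OF assms] by (simp add: TT_def)
qed

lemma tails:
  assumes gh: "good f g h" and gh': "good f g h'"
    and ez: "zw f g (pre h (i0 f g h)) = zw f g (pre h' (i0 f g h'))"
    and es: "sgn f g h (i0 f g h) = sgn f g h' (i0 f g h')"
  shows "h (i0 f g h + n) = h' (i0 f g h' + n)"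
proof (rule ccontr)
  assume "h (i0 f g h + n) \<noteq> h' (i0 f g h' + n)"
  then have ex: "\<exists>n. h (i0 f g h + n) \<noteq> h' (i0 f g h' + n)" by blast
  define n0 where "n0 = (LEAST n. h (i0 f g h + n) \<noteq> h' (i0 f g h' + n))"
  have ne: "h (i0 f g h + n0) \<noteq> h' (i0 f g h' + n0)" unfolding n0_def by (rule LeastI_ex[OF ex])
  have eqb: "\<And>m. m < n0 \<Longrightarrow> h (i0 f g h + m) = h' (i0 f g h' + m)" unfolding n0_def using not_less_Least by blast
  define i where "i = i0 f g h"
  define j where "j = i0 f g h'"
  have s: "pre (shift h i) n0 = pre (shift h' j) n0"
    by (rule nth_equalityI) (auto simp: shift_def i_def j_def eqb)
  have v: "valid (Inf h)" "valid (Inf h')" using gh gh' by (auto simp: good_def)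
  have zeq: "zw f g (pre h (i + n0)) = zw f g (pre h' (j + n0))"
    using ez s by (simp add: pre_add zw_append i_def j_def)
  have sg: "sgn f g h (i + n0) = sgn f g h' (j + n0)"
    using sgn_const[OF gh, of n0] sgn_const[OF gh', of n0] es by (simp add: i_def j_def)
  have big: "TT f g < length (zw f g (pre h (i + n0)))" using i0_props(1)[OF gh] by (simp add: i_def)
  have ln: "lg (gam f h) (hom g (pre h (i + n0))) \<noteq> lg (gam f h) (hom f (pre h (i + n0)))"
    using lg_ne[OF gh] by (simp add: i_def)
  have ln': "lg (gam f h') (hom g (pre h' (j + n0))) \<noteq> lg (gam f h') (hom f (pre h' (j + n0)))"
    using lg_ne[OF gh'] by (simp add: j_def)
  have ne2: "h (i + n0) \<noteq> h' (j + n0)" using ne by (simp add: i_def j_def)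
  have cb: "Cb g \<le> CC f g" "Cb f \<le> CC f g" by (auto simp: CC_def)
  show False
  proof (cases "sgn f g h (i + n0)")
    case True
    then have lt: "lg (gam f h) (hom g (pre h (i + n0))) < lg (gam f h) (hom f (pre h (i + n0)))"
      and lt': "lg (gam f h') (hom g (pre h' (j + n0))) < lg (gam f h') (hom f (pre h' (j + n0)))"
      using sg by (auto simp: sgn_def)
    have "length (red (winv (hom g (pre h (i + n0))) @ hom f (pre h (i + n0)))) \<le> 2 * CC f g"
      by (rule diverge_contra[OF injg bclcs(2) cb(1) v(1) v(2) agreeGs(2)[OF gh] agreeGs(1)[OF gh]
            agreeGs(2)[OF gh'] agreeGs(1)[OF gh'] lt lt' _ ne2])
         (use zeq in \<open>simp add: zw_def\<close>)
    then show False using big by (simp add: zw_def TT_def)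
  next
    case False
    then have lt: "lg (gam f h) (hom f (pre h (i + n0))) < lg (gam f h) (hom g (pre h (i + n0)))"
      and lt': "lg (gam f h') (hom f (pre h' (j + n0))) < lg (gam f h') (hom g (pre h' (j + n0)))"
      using sg ln ln' by (auto simp: sgn_def)
    have "length (red (winv (hom f (pre h (i + n0))) @ hom g (pre h (i + n0)))) \<le> 2 * CC f g"
      by (rule diverge_contra[OF injf bclcs(1) cb(2) v(1) v(2) agreeGs(1)[OF gh] agreeGs(2)[OF gh]
            agreeGs(1)[OF gh'] agreeGs(2)[OF gh'] lt lt' _ ne2])
         (use zeq in \<open>simp add: zw_swap\<close>)
    then show False using big by (simp add: zw_swap TT_def)
  qed
qed

lemma same_orbit:
  assumes gh: "good f g h" and gh': "good f g h'"
    and ez: "zw f g (pre h (i0 f g h)) = zw f g (pre h' (i0 f g h'))"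
    and es: "sgn f g h (i0 f g h) = sgn f g h' (i0 f g h')"
  shows "orbit f g (Inf h') = orbit f g (Inf h)"
proof -
  define i where "i = i0 f g h"
  define j where "j = i0 f g h'"
  have v: "valid (Inf h)" "valid (Inf h')" using gh gh' by (auto simp: good_def)
  have sh: "shift h i = shift h' j"
    using tails[OF gh gh' ez es] by (auto simp: shift_def i_def j_def)
  define w where "w = mult (pre h' j) (winv (pre h i))"
  have wE: "w \<in> Eq f g" unfolding w_def
    by (rule zw_Eq[OF reduced_pre[OF v(1)] reduced_pre[OF v(2)]]) (use ez in \<open>simp add: i_def j_def\<close>)
  have "act w (Inf h) = act (pre h' j) (act (winv (pre h i)) (Inf h))"
    unfolding w_def by (rule act_comp[OF v(1)])
  also have "\<dots> = act (pre h' j) (Inf (shift h' j))" using act_winv_pre[OF v(1), of i] sh by simp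
  also have "\<dots> = Inf (prepend (pre h' j) (shift h' j))"
  proof -
    have vp: "valid (Inf (prepend (pre h' j) (shift h' j)))" using v(2) by (simp only: prepend_pre_shift)
    show ?thesis by (rule act_prepend[OF vp valid_shift[OF v(2)]])
  qed
  also have "\<dots> = Inf h'" by (simp add: prepend_pre_shift)
  finally have "act w (Inf h) = Inf h'" .
  then show ?thesis using orbit_act[OF v(1) wE] by simp
qed

end


theorem theorem2p3:
  fixes f g :: "'a::finite \<Rightarrow> 'a word"
  assumes "inj_endo f" and "inj_endo g"
  shows "finite (orbit f g ` regular f g)"
proof -
  define D where "D \<alpha> = (case \<alpha> of Inf h \<Rightarrow> (zw f g (pre h (i0 f g h)), sgn f g h (i0 f g h)) | Fin w \<Rightarrow> ([], False))" for \<alpha>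
  let ?R = "regular f g"
  have "D ` ?R \<subseteq> {v. set v \<subseteq> UNIV \<and> length v \<le> TT f g + 2 * LL f g} \<times> UNIV"
  proof
    fix d assume "d \<in> D ` ?R"
    then obtain \<alpha> where a: "\<alpha> \<in> ?R" "d = D \<alpha>" by blast
    obtain h where h: "\<alpha> = Inf h" "good f g h" using reg_Inf[OF assms a(1)] by blast
    show "d \<in> {v. set v \<subseteq> UNIV \<and> length v \<le> TT f g + 2 * LL f g} \<times> UNIV"
      using i0_props(2)[OF assms h(2)] a(2) h(1) by (simp add: D_def)
  qed
  moreover have "finite ({v :: 'a word. set v \<subseteq> UNIV \<and> length v \<le> TT f g + 2 * LL f g} \<times> (UNIV :: bool set))"
    by (intro finite_cartesian_product finite_lists_length_le) auto
  ultimately have fD: "finite (D ` ?R)" by (rule finite_subset)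
  define F where "F d = orbit f g (SOME \<alpha>. \<alpha> \<in> ?R \<and> D \<alpha> = d)" for d
  have "orbit f g ` ?R \<subseteq> F ` (D ` ?R)"
  proof
    fix o' assume "o' \<in> orbit f g ` ?R"
    then obtain \<alpha> where a: "\<alpha> \<in> ?R" "o' = orbit f g \<alpha>" by blast
    define \<beta> where "\<beta> = (SOME \<beta>. \<beta> \<in> ?R \<and> D \<beta> = D \<alpha>)"
    have b: "\<beta> \<in> ?R \<and> D \<beta> = D \<alpha>" unfolding \<beta>_def by (rule someI[of _ \<alpha>]) (use a in simp)
    obtain h where h: "\<alpha> = Inf h" "good f g h" using reg_Inf[OF assms a(1)] by blast
    obtain h' where h': "\<beta> = Inf h'" "good f g h'" using reg_Inf[OF assms] b by blast
    have "zw f g (pre h (i0 f g h)) = zw f g (pre h' (i0 f g h'))" "sgn f g h (i0 f g h) = sgn f g h' (i0 f g h')"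
      using b h h' by (simp_all add: D_def)
    then have "orbit f g (Inf h') = orbit f g (Inf h)" by (rule same_orbit[OF assms h(2) h'(2)])
    moreover have "F (D \<alpha>) = orbit f g \<beta>" unfolding F_def \<beta>_def ..
    ultimately have "o' = F (D \<alpha>)" using a(2) h(1) h'(1) by simp
    then show "o' \<in> F ` (D ` ?R)" using a(1) by blast
  qed
  then show ?thesis using fD by (meson finite_imageI finite_subset)
qed


end
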